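(* Let $a>1$, $\sigma^2>0$, $d\in(0,\frac{\sigma^2}{a^2-1})$, $Z_i$ i.i.d. $\mathcal{N}(0,\sigma^2)$, $U_0=0$, $U_i=aU_{i-1}+Z_i$. Let $\theta>0$ solve $d=\frac1{2\pi}\int_{-\pi}^{\pi}\min(\theta,\sigma^2/g(w))dw$ with $g(w)=1+a^2-2a\cos w$, and let $d_n=\frac1n\sum_{i=1}^n\min(\theta,\sigma_{n,i}^2)$. Then there are positive constants $C_1,C_2$ such that for all $n\ge1$, $$\left|\frac1n\mathbb{E}[\jmath_{U_1^n}(U_1^n,d_n)]-\mathbb{R}_U(d)\right|\le\frac{C_1}n,\qquad \left|\frac1n\mathrm{Var}[\jmath_{U_1^n}(U_1^n,d_n)]-\mathbb{V}_U(d)\right|\le\frac{C_2}n,$$ where $\mathbb{R}_U(d)=\frac1{2\pi}\int_{-\pi}^{\pi}\frac12\log\max(g(w),\sigma^2/\theta)dw$ and $\mathbb{V}_U(d)=\frac1{4\pi}\int_{-\pi}^{\pi}\min[1,(\sigma^2/(\theta g(w)))^2]dw$.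
   Context: $\mathsf{F}$: $n\times n$ lower-triangular, ones on the diagonal, $-a$ on the first subdiagonal, zeros elsewhere; $\mu_{n,1}\le\cdots\le\mu_{n,n}$ eigenvalues of $\mathsf{F}'\mathsf{F}$; $\sigma_{n,i}^2=\sigma^2/\mu_{n,i}$; $\mathsf{S}$ orthogonal with $\mathsf{S}'(\mathsf{F}'\mathsf{F})^{-1}\mathsf{S}=\mathrm{diag}(1/\mu_{n,i})$, $x_1^n=\mathsf{S}'u_1^n$. For a distortion level $\delta$ with $n$-th order water level $\vartheta>0$ (i.e. $\delta=\frac1n\sum\min(\vartheta,\sigma_{n,i}^2)$), the $\mathsf{d}$-tilted information is $\jmath_{U_1^n}(u_1^n,\delta)=\sum_{i=1}^n\frac{\min(\vartheta,\sigma_{n,i}^2)}{2\vartheta}(\frac{x_i^2}{\sigma_{n,i}^2}-1)+\frac12\sum_{i=1}^n\log\frac{\max(\vartheta,\sigma_{n,i}^2)}{\vartheta}$. In particular the water level of $d_n$ is $\theta$. *)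

theory Defs
  imports "HOL-Probability.Probability" "Jordan_Normal_Form.Matrix"
begin

definition Fmat :: "real \<Rightarrow> nat \<Rightarrow> real mat" where
  "Fmat a n = mat n n (\<lambda>(i, j). if i = j then 1 else if i = Suc j then - a else 0)"

definition inv_of_mat :: "real mat \<Rightarrow> real mat" where
  "inv_of_mat A = (SOME B. B \<in> carrier_mat (dim_row A) (dim_row A) \<and> inverts_mat A B \<and> inverts_mat B A)"

fun AR :: "real \<Rightarrow> (nat \<Rightarrow> 'a \<Rightarrow> real) \<Rightarrow> nat \<Rightarrow> 'a \<Rightarrow> real" where
  "AR a Z 0 \<omega> = 0"
| "AR a Z (Suc i) \<omega> = a * AR a Z i \<omega> + Z (Suc i) \<omega>"

text \<open>d-tilted information with water level wl, given the coordinates x_i (i < n)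
  and the variances s_i = sigma_{n,i}^2.\<close>
definition jtilted :: "nat \<Rightarrow> (nat \<Rightarrow> real) \<Rightarrow> real \<Rightarrow> (nat \<Rightarrow> real) \<Rightarrow> real" where
  "jtilted n s wl x =
     (\<Sum>i<n. min wl (s i) / (2 * wl) * ((x i)\<^sup>2 / s i - 1))
     + 1/2 * (\<Sum>i<n. ln (max wl (s i) / wl))"

definition gfun :: "real \<Rightarrow> real \<Rightarrow> real" where
  "gfun a w = 1 + a\<^sup>2 - 2 * a * cos w"

end

theory Submission
  imports Defs "Jordan_Normal_Form.Determinant"
begin

lemma piece_bounds:
  fixes f :: "real \<Rightarrow> real"
  assumes mono: "\<And>x y. 0 \<le> x \<Longrightarrow> x \<le> y \<Longrightarrow> y \<le> pi \<Longrightarrow> f x \<le> f y"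
    and cont: "continuous_on {0..pi} f" and xy: "0 \<le> x" "x \<le> y" "y \<le> pi"
  shows "f x * (y - x) \<le> integral {x..y} f" "integral {x..y} f \<le> f y * (y - x)"
proof -
  have int: "f integrable_on {x..y}"
    by (rule integrable_continuous_interval) (rule continuous_on_subset[OF cont], use xy in auto)
  have "integral {x..y} (\<lambda>_. f x) \<le> integral {x..y} f"
    by (rule integral_le[OF _ int]) (use xy mono in auto)
  then show "f x * (y - x) \<le> integral {x..y} f" using xy by (simp add: mult.commute)
  have "integral {x..y} f \<le> integral {x..y} (\<lambda>_. f y)"
    by (rule integral_le[OF int]) (use xy mono in auto)
  then show "integral {x..y} f \<le> f y * (y - x)" using xy by (simp add: mult.commute)
qed

lemma riemann_mono:
  fixes f :: "real \<Rightarrow> real" and n :: nat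
  assumes mono: "\<And>x y. 0 \<le> x \<Longrightarrow> x \<le> y \<Longrightarrow> y \<le> pi \<Longrightarrow> f x \<le> f y"
    and cont: "continuous_on {0..pi} f" and n: "n \<ge> 1"
  shows "(\<Sum>k<n. f (k * pi / n)) * (pi / n) \<le> integral {0..pi} f"
        "integral {0..pi} f \<le> (\<Sum>k<n. f ((k+1) * pi / n)) * (pi / n)"
proof -
  have int: "f integrable_on {0..pi}" by (rule integrable_continuous_interval[OF cont])
  have aux: "m \<le> n \<Longrightarrow> (\<Sum>k<m. f (k * pi / n)) * (pi / n) \<le> integral {0..m*pi/n} f \<and>
          integral {0..m*pi/n} f \<le> (\<Sum>k<m. f ((k+1) * pi / n)) * (pi / n)" for m :: nat
    proof (induction m)
      case 0 then show ?case by simp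
    next
      case (Suc m)
      have npos: "real n > 0" using n by simp
      have a0: "0 \<le> m*pi/n" using npos by simp
      have a1: "m*pi/n \<le> (m+1)*pi/n" using npos by (simp add: divide_right_mono)
      have "real (m+1) \<le> real n" using Suc.prems by linarith
      then have "(m+1)*pi \<le> n * pi" by (simp add: mult_right_mono)
      then have a2: "(m+1)*pi/n \<le> pi" using npos by (simp add: divide_le_eq)
      have comb: "integral {0..m*pi/n} f + integral {m*pi/n..(m+1)*pi/n} f = integral {0..(m+1)*pi/n} f"
        by (rule Henstock_Kurzweil_Integration.integral_combine[OF a0 a1]) (rule integrable_on_subinterval[OF int], use a2 in auto)
      have len: "(m+1)*pi/n - m*pi/n = pi/n" by (simp add: add_divide_distrib distrib_right)
      have pb: "f (m*pi/n) * (pi/n) \<le> integral {m*pi/n..(m+1)*pi/n} f"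
               "integral {m*pi/n..(m+1)*pi/n} f \<le> f ((m+1)*pi/n) * (pi/n)"
        using piece_bounds[OF mono cont a0 a1 a2] len by auto
      from Suc.IH Suc.prems have IH: "(\<Sum>k<m. f (k * pi / n)) * (pi / n) \<le> integral {0..m*pi/n} f"
          "integral {0..m*pi/n} f \<le> (\<Sum>k<m. f ((k+1) * pi / n)) * (pi / n)" by auto
      have e1: "(\<Sum>k<Suc m. f (k * pi / n)) * (pi / n) = (\<Sum>k<m. f (k * pi / n)) * (pi / n) + f (m*pi/n) * (pi/n)"
        by (simp only: sum.lessThan_Suc distrib_right)
      have e2: "(\<Sum>k<Suc m. f ((k+1) * pi / n)) * (pi / n) = (\<Sum>k<m. f ((k+1) * pi / n)) * (pi / n) + f ((m+1)*pi/n) * (pi/n)"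
        by (simp only: sum.lessThan_Suc distrib_right)
      have "(\<Sum>k<Suc m. f (k * pi / n)) * (pi / n) \<le> integral {0..(m+1)*pi/n} f \<and>
          integral {0..(m+1)*pi/n} f \<le> (\<Sum>k<Suc m. f ((k+1) * pi / n)) * (pi / n)"
        unfolding e1 e2 using IH pb comb by linarith
      then show ?case by (simp only: Suc_eq_plus1)
    qed
  from aux[of n] n show "(\<Sum>k<n. f (k * pi / n)) * (pi / n) \<le> integral {0..pi} f"
        "integral {0..pi} f \<le> (\<Sum>k<n. f ((k+1) * pi / n)) * (pi / n)" by auto
qed

lemma split3: "(\<Sum>k<Suc (Suc m). F k) = F 0 + (\<Sum>k<m. F (Suc k)) + (F (Suc m) :: real)"
  unfolding sum.lessThan_Suc_shift[of F "Suc m"] by simp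

lemma bracket_sum:
  fixes f :: "real \<Rightarrow> real" and q :: "nat \<Rightarrow> real" and n :: nat
  assumes mono: "\<And>x y. 0 \<le> x \<Longrightarrow> x \<le> y \<Longrightarrow> y \<le> pi \<Longrightarrow> f x \<le> f y"
    and cont: "continuous_on {0..pi} f" and n: "n \<ge> 1"
    and fB: "\<And>x. 0 \<le> x \<Longrightarrow> x \<le> pi \<Longrightarrow> \<bar>f x\<bar> \<le> B"
    and qB: "\<And>i. i < n \<Longrightarrow> \<bar>q i\<bar> \<le> B"
    and lo: "\<And>j. j + 2 < n \<Longrightarrow> f ((j+1) * pi / n) \<le> q (j+2)"
    and hi: "\<And>j. j + 2 < n \<Longrightarrow> q j \<le> f ((j+2) * pi / n)"
  shows "\<bar>(\<Sum>i<n. q i) - n / pi * integral {0..pi} f\<bar> \<le> 6 * B"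
proof -
  have npos: "real n > 0" using n by simp
  define L where "L = (\<Sum>k<n. f (k * pi / n))"
  define U where "U = (\<Sum>k<n. f ((k+1) * pi / n))"
  have R: "L * (pi/n) \<le> integral {0..pi} f" "integral {0..pi} f \<le> U * (pi/n)"
    using riemann_mono(1)[OF mono cont n] riemann_mono(2)[OF mono cont n] unfolding L_def U_def by auto
  have I1: "L \<le> n / pi * integral {0..pi} f"
    using R(1) npos pi_gt_zero by (simp add: field_simps)
  have I2: "n / pi * integral {0..pi} f \<le> U"
    using R(2) npos pi_gt_zero by (simp add: field_simps)
  have tele: "U - L = f (n * pi / n) - f 0"
    unfolding U_def L_def sum_subtractf[symmetric]
    using sum_lessThan_telescope[of "\<lambda>k. f (k * pi / n)" n] by (simp add: add.commute)
  have "f (n*pi/n) = f pi" using npos by simp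
  with tele fB[of 0] fB[of pi] have UL: "U - L \<le> 2 * B" by auto
  have B0: "B \<ge> 0" using qB[of 0] n by auto
  show ?thesis
  proof (cases "n = 1")
    case True
    then have "L = f 0" "U = f pi" unfolding L_def U_def by auto
    moreover have "\<bar>(\<Sum>i<n. q i)\<bar> \<le> B" using True qB by auto
    ultimately show ?thesis using I1 I2 fB[of 0] fB[of pi] B0 by auto
  next
    case False
    then obtain m where m: "n = m + 2" using n by (metis add_2_eq_Suc' le_Suc_ex Suc_1 le_antisym not_less_eq_eq add.commute)
    have posf: "\<And>k. k \<le> n \<Longrightarrow> 0 \<le> k * pi / n \<and> k * pi / n \<le> pi"
      using npos by (auto simp: field_simps)
    have s1: "(\<Sum>i<n. q i) = q 0 + q 1 + (\<Sum>j<m. q (j+2))"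
      unfolding m by (simp del: sum.lessThan_Suc add: sum.lessThan_Suc_shift numeral_2_eq_2)
    have s2: "(\<Sum>i<n. q i) = (\<Sum>j<m. q j) + q m + q (m+1)"
      unfolding m by (simp add: numeral_2_eq_2)
    have sL: "L = f 0 + (\<Sum>j<m. f ((j+1)*pi/n)) + f ((m+1)*pi/n)"
      unfolding L_def m numeral_2_eq_2 add_Suc_right add_0_right split3 by (simp add: add_ac)
    have sU: "U = f (pi/n) + (\<Sum>j<m. f ((j+2)*pi/n)) + f ((m+2)*pi/n)"
      unfolding U_def m numeral_2_eq_2 add_Suc_right add_0_right split3 by (simp add: add_ac)
    have l1: "(\<Sum>j<m. f ((j+1)*pi/n)) \<le> (\<Sum>j<m. q (j+2))"
    proof (rule sum_mono)
      fix j assume "j \<in> {..<m}"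
      then have "j + 2 < n" using m by simp
      from lo[OF this] show "f ((j+1)*pi/n) \<le> q (j+2)" by (simp add: ac_simps)
    qed
    have h1: "(\<Sum>j<m. q j) \<le> (\<Sum>j<m. f ((j+2)*pi/n))"
    proof (rule sum_mono)
      fix j assume "j \<in> {..<m}"
      then have "j + 2 < n" using m by simp
      from hi[OF this] show "q j \<le> f ((j+2)*pi/n)" by (simp add: ac_simps)
    qed
    have b: "\<bar>f 0\<bar> \<le> B" "\<bar>f ((m+1)*pi/n)\<bar> \<le> B" "\<bar>f (pi/n)\<bar> \<le> B" "\<bar>f ((m+2)*pi/n)\<bar> \<le> B"
      "\<bar>q 0\<bar> \<le> B" "\<bar>q 1\<bar> \<le> B" "\<bar>q m\<bar> \<le> B" "\<bar>q (m+1)\<bar> \<le> B"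
      using fB posf[of 0] posf[of "m+1"] posf[of 1] posf[of "m+2"] qB m by auto
    show ?thesis using s1 s2 sL sU l1 h1 b I1 I2 UL by linarith
  qed
qed

lemma dsum2:
  fixes g :: "nat \<Rightarrow> nat \<Rightarrow> real"
  assumes "finite K" "k \<in> K" "l \<in> K"
  shows "(\<Sum>m\<in>K. \<Sum>p\<in>K. g m p * of_bool (k = m \<and> l = p)) = g k l"
proof -
  have "(\<Sum>p\<in>K. g m p * of_bool (k = m \<and> l = p)) = (if k = m then g m l else 0)" for m
    using assms by (cases "k = m") (simp_all add: of_bool_def if_distrib sum.delta cong: if_cong)
  then show ?thesis using assms by (simp add: sum.delta)
qed

locale gauss_fam =
  fixes M :: "'a measure" and Y :: "nat \<Rightarrow> 'a \<Rightarrow> real" and I :: "nat set" and s :: real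
  assumes P: "prob_space M"
    and ind: "prob_space.indep_vars M (\<lambda>_. borel) Y I"
    and dist: "\<And>i. i \<in> I \<Longrightarrow> distributed M lborel (Y i) (normal_density 0 s)"
    and spos: "s > 0"
begin

interpretation prob_space M by (rule P)

lemma meas[measurable]: "i \<in> I \<Longrightarrow> Y i \<in> borel_measurable M"
  using dist distributed_measurable by fastforce

lemma mom_int: "i \<in> I \<Longrightarrow> integrable M (\<lambda>\<omega>. Y i \<omega> ^ k)"
proof -
  assume i: "i \<in> I"
  have "integrable lborel (\<lambda>x. normal_density 0 s x * x ^ k)"
    using integrable_normal_moment[OF spos, of 0 k] by simp
  then show ?thesis
    using distributed_integrable[OF dist[OF i], of "\<lambda>x. x ^ k"] by simp
qed

definition mom :: "nat \<Rightarrow> real" where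
  "mom k = (if k = 0 then 1 else if k = 2 then s^2 else if k = 4 then 3 * s^4 else 0)"

lemma mom_val: "i \<in> I \<Longrightarrow> k \<le> 4 \<Longrightarrow> expectation (\<lambda>\<omega>. Y i \<omega> ^ k) = mom k"
proof -
  assume i: "i \<in> I" and k: "k \<le> 4"
  have e: "expectation (\<lambda>\<omega>. Y i \<omega> ^ k) = (\<integral>x. normal_density 0 s x * x ^ k \<partial>lborel)"
    using distributed_integral[OF dist[OF i], of "\<lambda>x. x ^ k"] by simp
  have ev: "(\<integral>x. normal_density 0 s x * x ^ (2*j) \<partial>lborel) = fact (2 * j) / ((2 / s\<^sup>2)^j * fact j)" for j
    using integral_normal_moment_even[OF spos, of 0 j] by simp
  have od: "(\<integral>x. normal_density 0 s x * x ^ (2*j+1) \<partial>lborel) = 0" for j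
    using integral_normal_moment_odd[OF spos, of 0 j] by simp
  have "k = 0 \<or> k = 1 \<or> k = 2 \<or> k = 3 \<or> k = 4" using k by auto
  then show ?thesis
  proof (elim disjE)
    assume "k = 0" then show ?thesis using prob_space by (simp add: mom_def)
  next
    assume "k = 1" then show ?thesis using e od[of 0] by (simp add: mom_def)
  next
    assume "k = 3" then show ?thesis using e od[of 1] by (simp add: mom_def)
  next
    assume "k = 2" then show ?thesis using e ev[of 1] spos by (simp add: mom_def)
  next
    assume k4: "k = 4"
    have "fact (2 * 2) / ((2 / s\<^sup>2)^2 * fact 2) = 3 * s^4"
      using spos by (simp add: fact_numeral field_simps power2_eq_square eval_nat_numeral)
    then show ?thesis using e ev[of 2] k4 by (simp add: mom_def)
  qed
qed

lemma prod_pow: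
  assumes J: "finite J" "J \<subseteq> I" and e: "\<And>i. i \<in> J \<Longrightarrow> e i \<le> 4"
  shows "integrable M (\<lambda>\<omega>. \<Prod>i\<in>J. Y i \<omega> ^ e i)"
    "expectation (\<lambda>\<omega>. \<Prod>i\<in>J. Y i \<omega> ^ e i) = (\<Prod>i\<in>J. mom (e i))"
proof -
  have ind2: "indep_vars (\<lambda>_. borel) (\<lambda>i \<omega>. Y i \<omega> ^ e i) J"
    using indep_vars_compose2[OF indep_vars_subset[OF ind J(2)], of "\<lambda>i x. x ^ e i" "\<lambda>_. borel"]
    by auto
  have int: "\<And>i. i \<in> J \<Longrightarrow> integrable M (\<lambda>\<omega>. Y i \<omega> ^ e i)" using mom_int J by auto
  show "integrable M (\<lambda>\<omega>. \<Prod>i\<in>J. Y i \<omega> ^ e i)"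
    by (rule indep_vars_integrable[OF J(1) ind2 int])
  have "expectation (\<lambda>\<omega>. \<Prod>i\<in>J. Y i \<omega> ^ e i) = (\<Prod>i\<in>J. expectation (\<lambda>\<omega>. Y i \<omega> ^ e i))"
    by (rule indep_vars_lebesgue_integral[OF J(1) ind2 int])
  also have "\<dots> = (\<Prod>i\<in>J. mom (e i))"
    by (rule prod.cong) (use mom_val J e in auto)
  finally show "expectation (\<lambda>\<omega>. \<Prod>i\<in>J. Y i \<omega> ^ e i) = (\<Prod>i\<in>J. mom (e i))" .
qed

definition cnt4 :: "nat \<Rightarrow> nat \<Rightarrow> nat \<Rightarrow> nat \<Rightarrow> nat \<Rightarrow> nat" where
  "cnt4 k l m p i = of_bool (i = k) + of_bool (i = l) + of_bool (i = m) + of_bool (i = p)"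

lemma four_as_prod:
  "Y k \<omega> * Y l \<omega> * Y m \<omega> * Y p \<omega> = (\<Prod>i\<in>{k,l,m,p}. Y i \<omega> ^ cnt4 k l m p i)"
  unfolding cnt4_def
  by (cases "k = l"; cases "k = m"; cases "k = p"; cases "l = m"; cases "l = p"; cases "m = p")
     (simp_all add: power2_eq_square power3_eq_cube power4_eq_xxxx insert_commute)

lemma four_moment:
  assumes "k \<in> I" "l \<in> I" "m \<in> I" "p \<in> I"
  shows "integrable M (\<lambda>\<omega>. Y k \<omega> * Y l \<omega> * Y m \<omega> * Y p \<omega>)"
    "expectation (\<lambda>\<omega>. Y k \<omega> * Y l \<omega> * Y m \<omega> * Y p \<omega>) =
      s^4 * (of_bool (k = l \<and> m = p) + of_bool (k = m \<and> l = p) + of_bool (k = p \<and> l = m))"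
proof -
  have J: "finite {k,l,m,p}" "{k,l,m,p} \<subseteq> I" using assms by auto
  have e: "\<And>i. i \<in> {k,l,m,p} \<Longrightarrow> cnt4 k l m p i \<le> 4" unfolding cnt4_def by auto
  show "integrable M (\<lambda>\<omega>. Y k \<omega> * Y l \<omega> * Y m \<omega> * Y p \<omega>)"
    unfolding four_as_prod using prod_pow(1)[OF J e] .
  have "expectation (\<lambda>\<omega>. Y k \<omega> * Y l \<omega> * Y m \<omega> * Y p \<omega>) = (\<Prod>i\<in>{k,l,m,p}. mom (cnt4 k l m p i))"
    unfolding four_as_prod using prod_pow(2)[OF J e] .
  also have "\<dots> = s^4 * (of_bool (k = l \<and> m = p) + of_bool (k = m \<and> l = p) + of_bool (k = p \<and> l = m))"
    unfolding cnt4_def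
    by (cases "k = l"; cases "k = m"; cases "k = p"; cases "l = m"; cases "l = p"; cases "m = p")
       (simp_all add: mom_def insert_commute power2_eq_square power4_eq_xxxx)
  finally show "expectation (\<lambda>\<omega>. Y k \<omega> * Y l \<omega> * Y m \<omega> * Y p \<omega>) =
      s^4 * (of_bool (k = l \<and> m = p) + of_bool (k = m \<and> l = p) + of_bool (k = p \<and> l = m))" .
qed

lemma two_moment:
  assumes "k \<in> I" "l \<in> I"
  shows "integrable M (\<lambda>\<omega>. Y k \<omega> * Y l \<omega>)"
    "expectation (\<lambda>\<omega>. Y k \<omega> * Y l \<omega>) = s^2 * of_bool (k = l)"
proof -
  have J: "finite {k,l}" "{k,l} \<subseteq> I" using assms by auto
  define c where "c i = of_bool (i = k) + (of_bool (i = l) :: nat)" for i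
  have e: "\<And>i. i \<in> {k,l} \<Longrightarrow> c i \<le> 4" unfolding c_def by auto
  have fp: "Y k \<omega> * Y l \<omega> = (\<Prod>i\<in>{k,l}. Y i \<omega> ^ c i)" for \<omega>
    unfolding c_def by (cases "k = l") (simp_all add: power2_eq_square)
  show "integrable M (\<lambda>\<omega>. Y k \<omega> * Y l \<omega>)"
    unfolding fp using prod_pow(1)[OF J e] .
  have "expectation (\<lambda>\<omega>. Y k \<omega> * Y l \<omega>) = (\<Prod>i\<in>{k,l}. mom (c i))"
    unfolding fp using prod_pow(2)[OF J e] .
  also have "\<dots> = s^2 * of_bool (k = l)"
    unfolding c_def by (cases "k = l") (simp_all add: mom_def)
  finally show "expectation (\<lambda>\<omega>. Y k \<omega> * Y l \<omega>) = s^2 * of_bool (k = l)" .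
qed

lemma quad_sq:
  fixes A :: "nat \<Rightarrow> nat \<Rightarrow> real"
  shows   "(\<Sum>k\<in>K. \<Sum>l\<in>K. A k l * Y k \<omega> * Y l \<omega>)\<^sup>2 =
   (\<Sum>k\<in>K. \<Sum>l\<in>K. \<Sum>m\<in>K. \<Sum>p\<in>K. A k l * A m p * (Y k \<omega> * Y l \<omega> * Y m \<omega> * Y p \<omega>))"
  apply (simp only: power2_eq_square sum_distrib_right)
  apply (simp only: sum_distrib_left)
  apply (simp add: mult_ac)
  done

lemma quad_form:
  fixes A :: "nat \<Rightarrow> nat \<Rightarrow> real" and K :: "nat set"
  assumes K: "finite K" "K \<subseteq> I"
  defines "Q \<equiv> (\<lambda>\<omega>. \<Sum>k\<in>K. \<Sum>l\<in>K. A k l * Y k \<omega> * Y l \<omega>)"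
  shows "integrable M Q" "integrable M (\<lambda>\<omega>. (Q \<omega>)\<^sup>2)"
    "expectation Q = s^2 * (\<Sum>k\<in>K. A k k)"
    "expectation (\<lambda>\<omega>. (Q \<omega>)\<^sup>2) = s^4 * ((\<Sum>k\<in>K. A k k)\<^sup>2 + (\<Sum>k\<in>K. \<Sum>l\<in>K. A k l * (A k l + A l k)))"
proof -
  have i2: "\<And>k l. k \<in> K \<Longrightarrow> l \<in> K \<Longrightarrow> integrable M (\<lambda>\<omega>. A k l * Y k \<omega> * Y l \<omega>)"
  proof -
    fix k l assume "k \<in> K" "l \<in> K"
    then have "integrable M (\<lambda>\<omega>. A k l * (Y k \<omega> * Y l \<omega>))"
      using two_moment(1) K by (intro integrable_mult_right) auto
    then show "integrable M (\<lambda>\<omega>. A k l * Y k \<omega> * Y l \<omega>)" by (simp add: mult.assoc)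
  qed
  show "integrable M Q" unfolding Q_def by (auto intro!: Bochner_Integration.integrable_sum i2)
  have "expectation Q = (\<Sum>k\<in>K. \<Sum>l\<in>K. expectation (\<lambda>\<omega>. A k l * Y k \<omega> * Y l \<omega>))"
    unfolding Q_def using i2 by (simp add: Bochner_Integration.integral_sum integrable_sum)
  also have "\<dots> = (\<Sum>k\<in>K. \<Sum>l\<in>K. A k l * (s^2 * of_bool (k = l)))"
  proof (intro sum.cong refl)
    fix k l assume kl: "k \<in> K" "l \<in> K"
    have "expectation (\<lambda>\<omega>. A k l * Y k \<omega> * Y l \<omega>) = A k l * expectation (\<lambda>\<omega>. Y k \<omega> * Y l \<omega>)"
      by (simp add: mult.assoc)
    then show "expectation (\<lambda>\<omega>. A k l * Y k \<omega> * Y l \<omega>) = A k l * (s^2 * of_bool (k = l))"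
    proof -
      have "k \<in> I" "l \<in> I" using kl K by auto
      from two_moment(2)[OF this] show ?thesis using \<open>expectation (\<lambda>\<omega>. A k l * Y k \<omega> * Y l \<omega>) = A k l * expectation (\<lambda>\<omega>. Y k \<omega> * Y l \<omega>)\<close> by simp
    qed
  qed
  also have "\<dots> = s^2 * (\<Sum>k\<in>K. A k k)"
    using K(1) by (simp add: sum_distrib_left of_bool_def if_distrib sum.delta' mult.commute cong: if_cong)
  finally show "expectation Q = s^2 * (\<Sum>k\<in>K. A k k)" .
  have i4: "\<And>k l m p. k \<in> K \<Longrightarrow> l \<in> K \<Longrightarrow> m \<in> K \<Longrightarrow> p \<in> K \<Longrightarrow>
      integrable M (\<lambda>\<omega>. A k l * A m p * (Y k \<omega> * Y l \<omega> * Y m \<omega> * Y p \<omega>))"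
    by (intro integrable_mult_right four_moment(1)) (use K in auto)
  have sq: "(\<lambda>\<omega>. (Q \<omega>)\<^sup>2) = (\<lambda>\<omega>. \<Sum>k\<in>K. \<Sum>l\<in>K. \<Sum>m\<in>K. \<Sum>p\<in>K. A k l * A m p * (Y k \<omega> * Y l \<omega> * Y m \<omega> * Y p \<omega>))"
    unfolding Q_def quad_sq ..
  show "integrable M (\<lambda>\<omega>. (Q \<omega>)\<^sup>2)" unfolding sq by (auto intro!: Bochner_Integration.integrable_sum i4)
  have "expectation (\<lambda>\<omega>. (Q \<omega>)\<^sup>2) = (\<Sum>k\<in>K. \<Sum>l\<in>K. \<Sum>m\<in>K. \<Sum>p\<in>K.
       expectation (\<lambda>\<omega>. A k l * A m p * (Y k \<omega> * Y l \<omega> * Y m \<omega> * Y p \<omega>)))"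
    unfolding sq using i4 by (simp add: Bochner_Integration.integral_sum integrable_sum)
  also have "\<dots> = (\<Sum>k\<in>K. \<Sum>l\<in>K. \<Sum>m\<in>K. \<Sum>p\<in>K. A k l * A m p *
      (s^4 * (of_bool (k = l \<and> m = p) + of_bool (k = m \<and> l = p) + of_bool (k = p \<and> l = m))))"
  proof (intro sum.cong refl)
    fix k l m p assume kl: "k \<in> K" "l \<in> K" "m \<in> K" "p \<in> K"
    then have "k \<in> I" "l \<in> I" "m \<in> I" "p \<in> I" using K by auto
    from four_moment(2)[OF this]
    show "expectation (\<lambda>\<omega>. A k l * A m p * (Y k \<omega> * Y l \<omega> * Y m \<omega> * Y p \<omega>)) = A k l * A m p *
      (s^4 * (of_bool (k = l \<and> m = p) + of_bool (k = m \<and> l = p) + of_bool (k = p \<and> l = m)))"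
      by simp
  qed
  also have "\<dots> = s^4 * ((\<Sum>k\<in>K. A k k)\<^sup>2 + (\<Sum>k\<in>K. \<Sum>l\<in>K. A k l * (A k l + A l k)))"
  proof -
    have a: "(\<Sum>k\<in>K. \<Sum>l\<in>K. \<Sum>m\<in>K. \<Sum>p\<in>K. A k l * A m p * of_bool (k = l \<and> m = p)) = (\<Sum>k\<in>K. A k k)\<^sup>2"
    proof -
      have "(\<Sum>m\<in>K. \<Sum>p\<in>K. A k l * A m p * of_bool (k = l \<and> m = p)) = (if k = l then A k k * (\<Sum>m\<in>K. A m m) else 0)" for k l
        using K(1) by (cases "k = l") (simp_all add: of_bool_def if_distrib sum.delta' sum_distrib_left cong: if_cong)
      then show ?thesis
        using K(1) by (simp add: sum.delta' power2_eq_square sum_distrib_right cong: if_cong)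
    qed
    have b: "(\<Sum>k\<in>K. \<Sum>l\<in>K. \<Sum>m\<in>K. \<Sum>p\<in>K. A k l * A m p * of_bool (k = m \<and> l = p)) = (\<Sum>k\<in>K. \<Sum>l\<in>K. A k l * A k l)"
      using dsum2[OF K(1), of _ _ "\<lambda>m p. A _ _ * A m p"] by (intro sum.cong refl) simp
    have c: "(\<Sum>k\<in>K. \<Sum>l\<in>K. \<Sum>m\<in>K. \<Sum>p\<in>K. A k l * A m p * of_bool (k = p \<and> l = m)) = (\<Sum>k\<in>K. \<Sum>l\<in>K. A k l * A l k)"
    proof (intro sum.cong refl)
      fix k l assume "k \<in> K" "l \<in> K"
      have "(\<Sum>m\<in>K. \<Sum>p\<in>K. A k l * A m p * of_bool (k = p \<and> l = m)) = (\<Sum>m\<in>K. \<Sum>p\<in>K. A k l * A m p * of_bool (l = m \<and> k = p))"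
        by (simp add: conj_commute)
      also have "\<dots> = A k l * A l k" using dsum2[OF K(1) \<open>l \<in> K\<close> \<open>k \<in> K\<close>, of "\<lambda>m p. A k l * A m p"] by simp
      finally show "(\<Sum>m\<in>K. \<Sum>p\<in>K. A k l * A m p * of_bool (k = p \<and> l = m)) = A k l * A l k" .
    qed
    have "(\<Sum>k\<in>K. \<Sum>l\<in>K. \<Sum>m\<in>K. \<Sum>p\<in>K. A k l * A m p *
      (s^4 * (of_bool (k = l \<and> m = p) + of_bool (k = m \<and> l = p) + of_bool (k = p \<and> l = m)))) =
      s^4 * ((\<Sum>k\<in>K. \<Sum>l\<in>K. \<Sum>m\<in>K. \<Sum>p\<in>K. A k l * A m p * of_bool (k = l \<and> m = p))
       + (\<Sum>k\<in>K. \<Sum>l\<in>K. \<Sum>m\<in>K. \<Sum>p\<in>K. A k l * A m p * of_bool (k = m \<and> l = p))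
       + (\<Sum>k\<in>K. \<Sum>l\<in>K. \<Sum>m\<in>K. \<Sum>p\<in>K. A k l * A m p * of_bool (k = p \<and> l = m)))"
      by (simp only: sum_distrib_left sum.distrib[symmetric] distrib_left mult_ac)
    also have "\<dots> = s^4 * ((\<Sum>k\<in>K. A k k)\<^sup>2 + (\<Sum>k\<in>K. \<Sum>l\<in>K. A k l * A k l) + (\<Sum>k\<in>K. \<Sum>l\<in>K. A k l * A l k))"
      unfolding a b c ..
    also have "\<dots> = s^4 * ((\<Sum>k\<in>K. A k k)\<^sup>2 + (\<Sum>k\<in>K. \<Sum>l\<in>K. A k l * (A k l + A l k)))"
      by (simp add: distrib_left sum.distrib)
    finally show ?thesis .
  qed
  finally show "expectation (\<lambda>\<omega>. (Q \<omega>)\<^sup>2) = s^4 * ((\<Sum>k\<in>K. A k k)\<^sup>2 + (\<Sum>k\<in>K. \<Sum>l\<in>K. A k l * (A k l + A l k)))" .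
qed

end

lemma prodsum: "c * (\<Sum>m\<in>I. x m) * (\<Sum>m'\<in>J. y m') = (\<Sum>m\<in>I. \<Sum>m'\<in>J. c * x m * (y m' :: real))"
proof -
  have "c * (\<Sum>m\<in>I. x m) * (\<Sum>m'\<in>J. y m') = c * ((\<Sum>m\<in>I. x m) * (\<Sum>m'\<in>J. y m'))" by (simp only: mult.assoc)
  also have "\<dots> = c * (\<Sum>m\<in>I. \<Sum>m'\<in>J. x m * y m')" by (simp only: sum_product)
  also have "\<dots> = (\<Sum>m\<in>I. \<Sum>m'\<in>J. c * (x m * y m'))" by (simp only: sum_distrib_left)
  finally show ?thesis by (simp only: mult.assoc)
qed

lemma swap3: "(\<Sum>i\<in>I. \<Sum>m\<in>J. \<Sum>m'\<in>K. (f i m m' :: real)) = (\<Sum>m\<in>J. \<Sum>m'\<in>K. \<Sum>i\<in>I. f i m m')"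
proof -
  have "(\<Sum>i\<in>I. \<Sum>m\<in>J. \<Sum>m'\<in>K. f i m m') = (\<Sum>m\<in>J. \<Sum>i\<in>I. \<Sum>m'\<in>K. f i m m')" by (rule sum.swap)
  also have "\<dots> = (\<Sum>m\<in>J. \<Sum>m'\<in>K. \<Sum>i\<in>I. f i m m')" by (rule sum.cong[OF refl]) (rule sum.swap)
  finally show ?thesis .
qed

lemma swap4: "(\<Sum>m\<in>I. \<Sum>m'\<in>J. \<Sum>i\<in>K. \<Sum>j\<in>L. (f m m' i j :: real)) = (\<Sum>i\<in>K. \<Sum>j\<in>L. \<Sum>m\<in>I. \<Sum>m'\<in>J. f m m' i j)"
proof -
  have "(\<Sum>m\<in>I. \<Sum>m'\<in>J. \<Sum>i\<in>K. \<Sum>j\<in>L. f m m' i j) = (\<Sum>m\<in>I. \<Sum>i\<in>K. \<Sum>j\<in>L. \<Sum>m'\<in>J. f m m' i j)"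
    by (rule sum.cong[OF refl]) (rule swap3)
  also have "\<dots> = (\<Sum>i\<in>K. \<Sum>j\<in>L. \<Sum>m\<in>I. \<Sum>m'\<in>J. f m m' i j)" by (rule swap3)
  finally show ?thesis .
qed

lemma quad_moments:
  fixes M :: "'a measure" and Z :: "nat \<Rightarrow> 'a \<Rightarrow> real" and b :: "nat \<Rightarrow> nat \<Rightarrow> real"
    and cc gd :: "nat \<Rightarrow> real" and \<sigma>2 :: real
  assumes P: "prob_space M"
    and Zind: "prob_space.indep_vars M (\<lambda>_. borel) Z {1..}"
    and Zdist: "\<And>i. i \<ge> 1 \<Longrightarrow> distributed M lborel (Z i) (normal_density 0 (sqrt \<sigma>2))"
    and sig: "\<sigma>2 > 0"
    and G: "\<And>i j. i < n \<Longrightarrow> j < n \<Longrightarrow> (\<Sum>m<n. b i m * b j m) = (if i = j then gd i else 0)"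
  defines "Q \<equiv> (\<lambda>\<omega>. \<Sum>i<n. cc i * (\<Sum>m<n. b i m * Z (Suc m) \<omega>)\<^sup>2)"
  shows "integrable M Q" "integrable M (\<lambda>\<omega>. (Q \<omega>)\<^sup>2)"
    "integral\<^sup>L M Q = \<sigma>2 * (\<Sum>i<n. cc i * gd i)"
    "integral\<^sup>L M (\<lambda>\<omega>. (Q \<omega>)\<^sup>2) - (integral\<^sup>L M Q)\<^sup>2 = 2 * \<sigma>2\<^sup>2 * (\<Sum>i<n. (cc i)\<^sup>2 * (gd i)\<^sup>2)"
proof -
  interpret gauss_fam M Z "{1..}" "sqrt \<sigma>2"
  proof (rule gauss_fam.intro)
    show "prob_space M" by (rule P)
    show "prob_space.indep_vars M (\<lambda>_. borel) Z {1..}" by (rule Zind)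
    show "\<And>i. i \<in> {1..} \<Longrightarrow> distributed M lborel (Z i) (\<lambda>x. ennreal (normal_density 0 (sqrt \<sigma>2) x))" using Zdist by simp
    show "sqrt \<sigma>2 > 0" using sig by simp
  qed
  define A where "A m m' = (\<Sum>i<n. cc i * b i m * b i m')" for m m'
  define A' where "A' k l = A (k - 1) (l - 1)" for k l
  have Qe: "Q \<omega> = (\<Sum>k\<in>{1..n}. \<Sum>l\<in>{1..n}. A' k l * Z k \<omega> * Z l \<omega>)" for \<omega>
  proof -
    have "Q \<omega> = (\<Sum>i<n. \<Sum>m<n. \<Sum>m'<n. cc i * b i m * b i m' * Z (Suc m) \<omega> * Z (Suc m') \<omega>)"
      unfolding Q_def power2_eq_square sum_product
      by (intro sum.cong refl) (simp add: sum_distrib_left mult_ac)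
    also have "\<dots> = (\<Sum>m<n. \<Sum>m'<n. \<Sum>i<n. cc i * b i m * b i m' * Z (Suc m) \<omega> * Z (Suc m') \<omega>)"
      by (rule swap3)
    also have "\<dots> = (\<Sum>m<n. \<Sum>m'<n. A m m' * Z (Suc m) \<omega> * Z (Suc m') \<omega>)"
      unfolding A_def by (simp add: sum_distrib_right)
    also have "\<dots> = (\<Sum>k\<in>{1..n}. \<Sum>l\<in>{1..n}. A' k l * Z k \<omega> * Z l \<omega>)"
      unfolding A'_def by (simp add: sum.atLeast1_atMost_eq)
    finally show ?thesis .
  qed
  have Qf: "Q = (\<lambda>\<omega>. \<Sum>k\<in>{1..n}. \<Sum>l\<in>{1..n}. A' k l * Z k \<omega> * Z l \<omega>)" using Qe by auto
  have K: "finite {1..n}" "{1..n} \<subseteq> {1::nat..}" by auto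
  note qf = quad_form[OF K, of A']
  have s2: "(sqrt \<sigma>2)^2 = \<sigma>2" using sig by simp
  have s4: "(sqrt \<sigma>2)^4 = \<sigma>2\<^sup>2"
  proof -
    have "(sqrt \<sigma>2)^4 = ((sqrt \<sigma>2)^2)^2" by (simp add: power_mult[symmetric])
    then show ?thesis using s2 by simp
  qed
  show "integrable M Q" unfolding Qf using qf(1) .
  show "integrable M (\<lambda>\<omega>. (Q \<omega>)\<^sup>2)" unfolding Qf using qf(2) .
  have trA: "(\<Sum>k\<in>{1..n}. A' k k) = (\<Sum>i<n. cc i * gd i)"
  proof -
    have "(\<Sum>k\<in>{1..n}. A' k k) = (\<Sum>m<n. A m m)" unfolding A'_def by (simp add: sum.atLeast1_atMost_eq)
    also have "\<dots> = (\<Sum>m<n. \<Sum>i<n. cc i * (b i m * b i m))"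
      unfolding A_def by (simp add: mult.assoc)
    also have "\<dots> = (\<Sum>i<n. \<Sum>m<n. cc i * (b i m * b i m))" by (rule sum.swap)
    also have "\<dots> = (\<Sum>i<n. cc i * (\<Sum>m<n. b i m * b i m))" by (simp add: sum_distrib_left)
    also have "\<dots> = (\<Sum>i<n. cc i * gd i)" using G by simp
    finally show ?thesis .
  qed
  have EQ: "integral\<^sup>L M Q = \<sigma>2 * (\<Sum>i<n. cc i * gd i)" unfolding Qf qf(3) trA s2 ..
  then show "integral\<^sup>L M Q = \<sigma>2 * (\<Sum>i<n. cc i * gd i)" .
  have symA: "A m m' = A m' m" for m m' unfolding A_def by (simp add: mult_ac)
  have sqA: "(\<Sum>k\<in>{1..n}. \<Sum>l\<in>{1..n}. A' k l * (A' k l + A' l k)) = 2 * (\<Sum>i<n. (cc i)\<^sup>2 * (gd i)\<^sup>2)"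
  proof -
    have "(\<Sum>k\<in>{1..n}. \<Sum>l\<in>{1..n}. A' k l * (A' k l + A' l k)) = (\<Sum>m<n. \<Sum>m'<n. 2 * (A m m' * A m m'))"
      unfolding A'_def by (simp add: sum.atLeast1_atMost_eq symA[of _ "_"] mult_ac)
    also have "\<dots> = 2 * (\<Sum>m<n. \<Sum>m'<n. A m m' * A m m')" by (simp add: sum_distrib_left)
    also have "(\<Sum>m<n. \<Sum>m'<n. A m m' * A m m') = (\<Sum>i<n. \<Sum>j<n. cc i * cc j * (\<Sum>m<n. b i m * b j m) * (\<Sum>m'<n. b i m' * b j m'))"
    proof -
      have "(\<Sum>m<n. \<Sum>m'<n. A m m' * A m m') = (\<Sum>m<n. \<Sum>m'<n. \<Sum>i<n. \<Sum>j<n. cc i * cc j * (b i m * b j m) * (b i m' * b j m'))"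
        unfolding A_def sum_product by (intro sum.cong refl) (simp add: mult_ac)
      also have "\<dots> = (\<Sum>i<n. \<Sum>j<n. \<Sum>m<n. \<Sum>m'<n. cc i * cc j * (b i m * b j m) * (b i m' * b j m'))"
        by (rule swap4)
      also have "\<dots> = (\<Sum>i<n. \<Sum>j<n. cc i * cc j * (\<Sum>m<n. b i m * b j m) * (\<Sum>m'<n. b i m' * b j m'))"
        by (intro sum.cong refl) (rule prodsum[symmetric])
      finally show ?thesis .
    qed
    also have "\<dots> = (\<Sum>i<n. \<Sum>j<n. cc i * cc j * (if i = j then gd i else 0) * (if i = j then gd i else 0))"
      using G by simp
    also have "\<dots> = (\<Sum>i<n. (cc i)\<^sup>2 * (gd i)\<^sup>2)"
    proof (intro sum.cong refl)
      fix i assume i: "i \<in> {..<n}"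
      have "(\<Sum>j<n. cc i * cc j * (if i = j then gd i else 0) * (if i = j then gd i else 0)) =
            (\<Sum>j<n. if i = j then cc i * cc j * gd i * gd i else 0)"
        by (intro sum.cong refl) auto
      also have "\<dots> = (cc i)\<^sup>2 * (gd i)\<^sup>2" using i by (simp add: sum.delta power2_eq_square)
      finally show "(\<Sum>j<n. cc i * cc j * (if i = j then gd i else 0) * (if i = j then gd i else 0)) = (cc i)\<^sup>2 * (gd i)\<^sup>2" .
    qed
    finally show ?thesis by simp
  qed
  show "integral\<^sup>L M (\<lambda>\<omega>. (Q \<omega>)\<^sup>2) - (integral\<^sup>L M Q)\<^sup>2 = 2 * \<sigma>2\<^sup>2 * (\<Sum>i<n. (cc i)\<^sup>2 * (gd i)\<^sup>2)"
    unfolding Qf qf(3) qf(4) sqA s2 s4 by (simp add: algebra_simps)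
qed

lemma g_strict: "0 \<le> x \<Longrightarrow> x < y \<Longrightarrow> y \<le> pi \<Longrightarrow> a > 0 \<Longrightarrow> gfun a x < gfun a y"
  unfolding gfun_def using cos_monotone_0_pi[of x y] by (simp add: mult_strict_left_mono)

lemma g_mono: "0 \<le> x \<Longrightarrow> x \<le> y \<Longrightarrow> y \<le> pi \<Longrightarrow> a > 0 \<Longrightarrow> gfun a x \<le> gfun a y"
  using g_strict[of x y a] by (cases "x = y") auto

lemma g_bounds: "a > 1 \<Longrightarrow> (a - 1)\<^sup>2 \<le> gfun a w \<and> gfun a w \<le> (1 + a)\<^sup>2"
proof -
  assume a: "a > 1"
  have "a * (-1) \<le> a * cos w" "a * cos w \<le> a * 1" using a by (intro mult_left_mono; simp)+
  then show ?thesis unfolding gfun_def by (simp add: power2_eq_square algebra_simps)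
qed

lemma g_pos: "a > 1 \<Longrightarrow> gfun a w > 0"
proof -
  assume a: "a > 1"
  then have "(a - 1)\<^sup>2 > 0" by simp
  with g_bounds[OF a, of w] show ?thesis by linarith
qed

lemma sin_pair: fixes t w :: real shows "sin (t - w) + sin (t + w) = 2 * sin t * cos w"
  by (simp add: sin_add sin_diff)

lemma phi_at:
  assumes "n > 0"
  shows "sin ((real n + 1) * (real j * pi / real n)) - a * sin (real n * (real j * pi / real n)) = (-1)^j * sin (real j * pi / real n)"
proof -
  have e1: "(real n + 1) * (real j * pi / real n) = real j * pi + real j * pi / real n"
    using assms by (simp add: field_simps)
  have e2: "real n * (real j * pi / real n) = real j * pi" using assms by simp
  show ?thesis unfolding e1 e2 by (simp add: sin_add sin_npi cos_npi)
qed

lemma phi_root: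
  assumes n: "n > 0" and k: "1 \<le> k" "k + 1 < n"
  shows "\<exists>w. real k * pi / n < w \<and> w < real (k + 1) * pi / n \<and> sin ((real n + 1) * w) = a * sin (real n * w)"
proof -
  define \<phi> where "\<phi> w = sin ((real n + 1) * w) - a * sin (real n * w)" for w
  define x y where "x = real k * pi / n" and "y = real (k + 1) * pi / n"
  have npos: "real n > 0" using n by simp
  have kk: "real k > 0" "real k < real (k + 1)" "real (k + 1) < real n" using k by auto
  have xy1: "0 < x" unfolding x_def using kk npos by simp
  have xy2: "x < y" unfolding x_def y_def using kk npos pi_gt_zero
    by (intro divide_strict_right_mono mult_strict_right_mono) auto
  have "real (k + 1) * pi < real n * pi" using kk pi_gt_zero by (intro mult_strict_right_mono) auto
  then have xy3: "y < pi" unfolding y_def using npos by (simp add: divide_less_eq)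
  note xy = xy1 xy2 xy3
  have sx: "sin x > 0" and sy: "sin y > 0" using xy by (auto intro!: sin_gt_zero)
  have px: "\<phi> x = (-1)^k * sin x" unfolding \<phi>_def x_def using phi_at[OF n, of k a] by simp
  have py: "\<phi> y = (-1)^(k+1) * sin y" unfolding \<phi>_def y_def using phi_at[OF n, of "k+1" a] by simp
  have cont: "continuous_on {x..y} \<phi>" unfolding \<phi>_def by (intro continuous_intros)
  have "\<exists>w\<ge>x. w \<le> y \<and> \<phi> w = 0"
  proof (cases "even k")
    case True
    then have "\<phi> y \<le> 0" "0 \<le> \<phi> x" using px py sx sy by auto
    then show ?thesis using IVT2'[of \<phi> y 0 x, OF _ _ _ cont] xy by auto
  next
    case False
    then have "\<phi> x \<le> 0" "0 \<le> \<phi> y" using px py sx sy by auto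
    then show ?thesis using IVT'[of \<phi> x 0 y, OF _ _ _ cont] xy by auto
  qed
  then obtain w where w: "x \<le> w" "w \<le> y" "\<phi> w = 0" by auto
  have "\<phi> x \<noteq> 0" "\<phi> y \<noteq> 0" using px py sx sy by auto
  then have "w \<noteq> x" "w \<noteq> y" using w by auto
  then have "x < w" "w < y" using w by auto
  then show ?thesis using w(3) unfolding x_def y_def \<phi>_def by (intro exI[of _ w]) auto
qed

lemma smono_lower: "(\<And>i. Suc i \<le> m \<Longrightarrow> p i < p (Suc i)) \<Longrightarrow> j \<le> m \<Longrightarrow> j \<le> (p j :: nat)"
proof (induction j)
  case 0 then show ?case by simp
next
  case (Suc j)
  then have "j \<le> p j" by simp
  moreover have "p j < p (Suc j)" using Suc.prems by simp
  ultimately show ?case by simp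
qed

lemma smono_upper: "(\<And>i. Suc i \<le> m \<Longrightarrow> p i < p (Suc i)) \<Longrightarrow> j \<le> m \<Longrightarrow> p j + (m - j) \<le> (p m :: nat)"
proof (induction m)
  case 0 then show ?case by simp
next
  case (Suc m)
  show ?case
  proof (cases "j = Suc m")
    case True then show ?thesis by simp
  next
    case False
    then have "j \<le> m" using Suc.prems by simp
    then have "p j + (m - j) \<le> p m" using Suc by simp
    moreover have "p m < p (Suc m)" using Suc.prems by simp
    ultimately show ?thesis using \<open>j \<le> m\<close> by simp
  qed
qed

lemma F_carrier[simp]: "Fmat a n \<in> carrier_mat n n"
  unfolding Fmat_def by simp

lemma F_index: "i < n \<Longrightarrow> j < n \<Longrightarrow> Fmat a n $$ (i, j) = (if i = j then 1 else if i = Suc j then - a else 0)"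
  unfolding Fmat_def by simp

lemma F_coef: fixes a :: real shows "(if i = k then 1 else if i = Suc k then - a else 0) = of_bool (k = i) - a * of_bool (Suc k = i)"
  by auto

lemma sum_ofbool: "finite A \<Longrightarrow> (\<Sum>k\<in>A. of_bool (k = i) * (x k :: real)) = (if i \<in> A then x i else 0)"
proof -
  assume "finite A"
  have "(\<Sum>k\<in>A. of_bool (k = i) * x k) = (\<Sum>k\<in>A. if k = i then x k else 0)"
    by (rule sum.cong) auto
  then show ?thesis using \<open>finite A\<close> by (simp add: sum.delta')
qed

lemma sum_ofbool': "finite A \<Longrightarrow> (\<Sum>k\<in>A. of_bool (i = k) * (x k :: real)) = (if i \<in> A then x i else 0)"
  using sum_ofbool[of A i x] by (simp add: eq_commute)

lemma Frow_sum:
  fixes x :: "nat \<Rightarrow> real"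
  assumes "i < n"
  shows "(\<Sum>k = 0..<n. (if i = k then 1 else if i = Suc k then - a else 0) * x k) = x i - (if i > 0 then a * x (i - 1) else 0)"
proof -
  have "(\<Sum>k = 0..<n. (if i = k then 1 else if i = Suc k then - a else 0) * x k) =
        (\<Sum>k = 0..<n. of_bool (k = i) * x k - a * (of_bool (Suc k = i) * x k))"
    by (rule sum.cong) auto
  also have "\<dots> = (\<Sum>k = 0..<n. of_bool (k = i) * x k) - a * (\<Sum>k = 0..<n. of_bool (Suc k = i) * x k)"
    by (simp only: sum_subtractf sum_distrib_left)
  also have "(\<Sum>k = 0..<n. of_bool (k = i) * x k) = x i" using assms by (simp add: sum_ofbool)
  also have "(\<Sum>k = 0..<n. of_bool (Suc k = i) * x k) = (if i > 0 then x (i - 1) else 0)"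
  proof (cases i)
    case 0 then show ?thesis by simp
  next
    case (Suc i')
    then have "(\<Sum>k = 0..<n. of_bool (Suc k = i) * x k) = (\<Sum>k = 0..<n. of_bool (k = i') * x k)" by simp
    also have "\<dots> = x i'" using assms Suc by (simp add: sum_ofbool)
    finally show ?thesis using Suc by simp
  qed
  finally show ?thesis by simp
qed

lemma Fcol_sum:
  fixes u :: "nat \<Rightarrow> real"
  assumes "j < n"
  shows "(\<Sum>i = 0..<n. (if i = j then 1 else if i = Suc j then - a else 0) * u i) = u j - (if Suc j < n then a * u (Suc j) else 0)"
proof -
  have c: "(if i = j then 1 else if i = Suc j then - a else 0) = of_bool (i = j) - a * of_bool (i = Suc j)" for i :: nat
    by auto
  have "(\<Sum>i = 0..<n. (if i = j then 1 else if i = Suc j then - a else 0) * u i) =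
        (\<Sum>i = 0..<n. of_bool (i = j) * u i - a * (of_bool (i = Suc j) * u i))"
    by (rule sum.cong) auto
  also have "\<dots> = (\<Sum>i = 0..<n. of_bool (i = j) * u i) - a * (\<Sum>i = 0..<n. of_bool (i = Suc j) * u i)"
    by (simp only: sum_subtractf sum_distrib_left)
  also have "(\<Sum>i = 0..<n. of_bool (i = j) * u i) = u j" using assms by (simp add: sum_ofbool)
  also have "(\<Sum>i = 0..<n. of_bool (i = Suc j) * u i) = (if Suc j < n then u (Suc j) else 0)"
    by (simp add: sum_ofbool)
  finally show ?thesis by simp
qed

lemma F_mult_vec:
  assumes "v \<in> carrier_vec n" "i < n"
  shows "vec_index (Fmat a n *\<^sub>v v) i = vec_index v i - (if i > 0 then a * vec_index v (i - 1) else 0)"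
proof -
  have "vec_index (Fmat a n *\<^sub>v v) i = (\<Sum>k = 0..<n. (if i = k then 1 else if i = Suc k then - a else 0) * vec_index v k)"
    using assms unfolding Fmat_def by (simp add: scalar_prod_def)
  then show ?thesis using Frow_sum[OF assms(2), of a "\<lambda>k. vec_index v k"] by simp
qed

lemma FT_mult_vec:
  assumes "u \<in> carrier_vec n" "j < n"
  shows "vec_index ((Fmat a n)\<^sup>T *\<^sub>v u) j = vec_index u j - (if Suc j < n then a * vec_index u (Suc j) else 0)"
proof -
  have "vec_index ((Fmat a n)\<^sup>T *\<^sub>v u) j = (\<Sum>i = 0..<n. (if i = j then 1 else if i = Suc j then - a else 0) * vec_index u i)"
    using assms unfolding Fmat_def by (simp add: scalar_prod_def)
  then show ?thesis using Fcol_sum[OF assms(2), of a "\<lambda>k. vec_index u k"] by simp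
qed

definition Lmat :: "real \<Rightarrow> nat \<Rightarrow> real mat" where
  "Lmat a n = mat n n (\<lambda>(k, m). if m \<le> k then a ^ (k - m) else 0)"

lemma L_carrier[simp]: "Lmat a n \<in> carrier_mat n n"
  unfolding Lmat_def by simp

lemma FL: "Fmat a n * Lmat a n = 1\<^sub>m n"
proof (rule eq_matI)
  fix i j assume ij: "i < dim_row (1\<^sub>m n :: real mat)" "j < dim_col (1\<^sub>m n :: real mat)"
  then have i: "i < n" and j: "j < n" by auto
  have "(Fmat a n * Lmat a n) $$ (i, j) = (\<Sum>k = 0..<n. (if i = k then 1 else if i = Suc k then - a else 0) * (if j \<le> k then a ^ (k - j) else 0))"
    using i j unfolding Fmat_def Lmat_def by (simp add: scalar_prod_def)
  also have "\<dots> = (if j \<le> i then a ^ (i - j) else 0) - (if i > 0 then a * (if j \<le> i - 1 then a ^ (i - 1 - j) else 0) else 0)"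
    by (rule Frow_sum[OF i])
  also have "\<dots> = (if i = j then 1 else 0)"
  proof (cases "j \<le> i")
    case True
    show ?thesis
    proof (cases "j = i")
      case False
      with True have "i - j = Suc (i - 1 - j)" by auto
      then show ?thesis using True False by auto
    qed (cases i, auto)
  qed auto
  finally show "(Fmat a n * Lmat a n) $$ (i, j) = 1\<^sub>m n $$ (i, j)" using i j by simp
qed (auto simp: Fmat_def Lmat_def)

lemma LF: "Lmat a n * Fmat a n = 1\<^sub>m n"
  by (rule mat_mult_left_right_inverse[OF F_carrier L_carrier FL])


lemma sum_ifeq: "finite A \<Longrightarrow> (\<Sum>j\<in>A. (x j :: real) * (if j = i then c else 0)) = (if i \<in> A then x i * c else 0)"
proof -
  assume "finite A"
  have "(\<Sum>j\<in>A. x j * (if j = i then c else 0)) = (\<Sum>j\<in>A. if j = i then x j * c else 0)"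
    by (rule sum.cong) auto
  then show ?thesis using \<open>finite A\<close> by (simp add: sum.delta')
qed

lemma sum_ifeq': "finite A \<Longrightarrow> (\<Sum>j\<in>A. (if i = j then c else 0) * (x j :: real)) = (if i \<in> A then c * x i else 0)"
proof -
  assume "finite A"
  have "(\<Sum>j\<in>A. (if i = j then c else 0) * x j) = (\<Sum>j\<in>A. if i = j then c * x j else 0)"
    by (rule sum.cong) auto
  then show ?thesis using \<open>finite A\<close> by (simp add: sum.delta)
qed

locale spec =
  fixes a :: real and n :: nat and S :: "real mat" and \<mu> :: "nat \<Rightarrow> real"
  assumes a1: "a > 1" and n1: "n \<ge> 1" and Sc: "S \<in> carrier_mat n n"
    and SS: "transpose_mat S * S = 1\<^sub>m n"
    and mono: "\<forall>i j. i \<le> j \<and> j < n \<longrightarrow> \<mu> i \<le> \<mu> j"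
    and eig: "transpose_mat S * inv_of_mat (transpose_mat (Fmat a n) * Fmat a n) * S
         = mat n n (\<lambda>(i, j). if i = j then 1 / \<mu> i else 0)"
begin

abbreviation "F \<equiv> Fmat a n"
abbreviation "L \<equiv> Lmat a n"
definition "A = transpose_mat F * F"
definition "B = L * transpose_mat L"
definition "Dm = mat n n (\<lambda>(i, j). if i = j then 1 / \<mu> i else 0)"

lemma FT_c[simp]: "transpose_mat F \<in> carrier_mat n n" by simp
lemma LT_c[simp]: "transpose_mat L \<in> carrier_mat n n" by simp
lemma A_c[simp]: "A \<in> carrier_mat n n" unfolding A_def by (rule mult_carrier_mat[OF FT_c F_carrier])
lemma B_c[simp]: "B \<in> carrier_mat n n" unfolding B_def by (rule mult_carrier_mat[OF L_carrier LT_c])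
lemma S_dims[simp]: "dim_row S = n" "dim_col S = n" using Sc by auto
lemma A_dims[simp]: "dim_row A = n" "dim_col A = n" using carrier_matD[OF A_c] by auto
lemma B_dims[simp]: "dim_row B = n" "dim_col B = n" using carrier_matD[OF B_c] by auto
lemma S_c[simp]: "S \<in> carrier_mat n n" by (rule Sc)
lemma ST_c[simp]: "transpose_mat S \<in> carrier_mat n n" using Sc by simp
lemma Dm_c[simp]: "Dm \<in> carrier_mat n n" unfolding Dm_def by simp
lemma Dm_dims[simp]: "dim_row Dm = n" "dim_col Dm = n" unfolding Dm_def by auto

lemma as3: "X \<in> carrier_mat n n \<Longrightarrow> Y \<in> carrier_mat n n \<Longrightarrow> Z \<in> carrier_mat n n \<Longrightarrow> X * Y * Z = X * (Y * (Z :: real mat))"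
  by (rule assoc_mult_mat)

lemma mc: "X \<in> carrier_mat n n \<Longrightarrow> Y \<in> carrier_mat n n \<Longrightarrow> X * (Y :: real mat) \<in> carrier_mat n n"
  by (rule mult_carrier_mat)

lemma AB: "A * B = 1\<^sub>m n"
proof -
  have "A * B = transpose_mat F * ((F * L) * transpose_mat L)"
    unfolding A_def B_def
    by (simp add: as3 mc)
  also have "\<dots> = transpose_mat F * transpose_mat L" unfolding FL left_mult_one_mat[OF LT_c] ..
  also have "\<dots> = transpose_mat (L * F)" by (simp add: transpose_mult[OF L_carrier F_carrier])
  also have "\<dots> = 1\<^sub>m n" unfolding LF by simp
  finally show ?thesis .
qed

lemma BA: "B * A = 1\<^sub>m n"
  by (rule mat_mult_left_right_inverse[OF A_c B_c AB])

lemma inv_eq: "inv_of_mat A = B"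
proof -
  have dr: "dim_row A = n" by simp
  let ?P = "\<lambda>X. X \<in> carrier_mat (dim_row A) (dim_row A) \<and> inverts_mat A X \<and> inverts_mat X A"
  have PB: "?P B" unfolding inverts_mat_def dr using AB BA by simp
  show ?thesis unfolding inv_of_mat_def
  proof (rule someI2[of ?P, OF PB])
    fix X assume PX: "?P X"
    then have Xc: "X \<in> carrier_mat n n" and XA: "X * A = 1\<^sub>m n" unfolding inverts_mat_def dr by auto
    have "X = X * (A * B)" using Xc by (simp add: AB)
    also have "\<dots> = (X * A) * B" using Xc by (simp add: as3)
    also have "\<dots> = B" using XA by simp
    finally show "X = B" .
  qed
qed

lemma eig': "transpose_mat S * B * S = Dm"
  using eig unfolding Dm_def inv_eq[unfolded A_def] by simp

lemma SST: "S * transpose_mat S = 1\<^sub>m n"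
  by (rule mat_mult_left_right_inverse[OF ST_c S_c SS])

lemma BS: "B * S = S * Dm"
proof -
  have "S * Dm = S * (transpose_mat S * B * S)" unfolding eig' ..
  also have "\<dots> = (S * transpose_mat S) * (B * S)"
    by (simp add: as3 mc)
  also have "\<dots> = B * S" unfolding SST by simp
  finally show ?thesis by simp
qed

lemma S_ASD: "S = (A * S) * Dm"
proof -
  have "S = (A * B) * S" unfolding AB using Sc by simp
  also have "\<dots> = A * (B * S)" by (simp add: as3)
  also have "\<dots> = A * (S * Dm)" unfolding BS ..
  also have "\<dots> = (A * S) * Dm" by (simp add: as3)
  finally show ?thesis .
qed

lemma SS_entry: "i < n \<Longrightarrow> j < n \<Longrightarrow> (\<Sum>k = 0..<n. S $$ (k, i) * S $$ (k, j)) = (if i = j then 1 else 0)"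
proof -
  assume ij: "i < n" "j < n"
  have "(transpose_mat S * S) $$ (i, j) = (\<Sum>k = 0..<n. S $$ (k, i) * S $$ (k, j))"
    using ij Sc by (simp add: scalar_prod_def)
  then show ?thesis using SS ij by simp
qed

lemma mult_Dm: "X \<in> carrier_mat n n \<Longrightarrow> k < n \<Longrightarrow> i < n \<Longrightarrow> (X * Dm) $$ (k, i) = X $$ (k, i) * (1 / \<mu> i)"
proof -
  assume X: "X \<in> carrier_mat n n" and ki: "k < n" "i < n"
  have "(X * Dm) $$ (k, i) = (\<Sum>j = 0..<n. X $$ (k, j) * (if j = i then 1 / \<mu> i else 0))"
    using X ki by (auto simp: scalar_prod_def Dm_def intro!: sum.cong)
  also have "\<dots> = X $$ (k, i) * (1 / \<mu> i)" using ki by (simp add: sum_ifeq)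
  finally show ?thesis .
qed

lemma col_rel: "i < n \<Longrightarrow> k < n \<Longrightarrow> S $$ (k, i) = (A * S) $$ (k, i) * (1 / \<mu> i)"
proof -
  assume ik: "i < n" "k < n"
  have "S $$ (k, i) = ((A * S) * Dm) $$ (k, i)" using S_ASD by simp
  also have "\<dots> = (A * S) $$ (k, i) * (1 / \<mu> i)" by (rule mult_Dm[OF mc[OF A_c S_c] ik(2) ik(1)])
  finally show ?thesis .
qed

lemma mu_nz: "i < n \<Longrightarrow> \<mu> i \<noteq> 0"
proof
  assume i: "i < n" and z: "\<mu> i = 0"
  then have "\<And>k. k < n \<Longrightarrow> S $$ (k, i) = 0" using col_rel by simp
  then have "(\<Sum>k = 0..<n. S $$ (k, i) * S $$ (k, i)) = 0" by simp
  with SS_entry[OF i i] show False by simp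
qed

lemma AS_entry: "i < n \<Longrightarrow> k < n \<Longrightarrow> (A * S) $$ (k, i) = \<mu> i * S $$ (k, i)"
  using col_rel[of i k] mu_nz[of i] by (simp add: field_simps)

lemma tmult_entry: "X \<in> carrier_mat n n \<Longrightarrow> Y \<in> carrier_mat n n \<Longrightarrow> i < n \<Longrightarrow> j < n \<Longrightarrow>
   (transpose_mat X * Y) $$ (i, j) = (\<Sum>k = 0..<n. X $$ (k, i) * Y $$ (k, j))"
  by (simp add: scalar_prod_def)

lemma mult_entry: "X \<in> carrier_mat n n \<Longrightarrow> Y \<in> carrier_mat n n \<Longrightarrow> i < n \<Longrightarrow> j < n \<Longrightarrow>
   (X * Y) $$ (i, j) = (\<Sum>k = 0..<n. X $$ (i, k) * Y $$ (k, j))"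
  by (simp add: scalar_prod_def)

lemma A_entry: "k < n \<Longrightarrow> l < n \<Longrightarrow> A $$ (k, l) = (\<Sum>j = 0..<n. F $$ (j, k) * F $$ (j, l))"
  unfolding A_def by (rule tmult_entry) auto

lemma A_sym: "k < n \<Longrightarrow> l < n \<Longrightarrow> A $$ (k, l) = A $$ (l, k)"
  using A_entry by (simp add: mult.commute)

lemma mu_sq: "i < n \<Longrightarrow> \<mu> i = (\<Sum>k = 0..<n. ((F * S) $$ (k, i))\<^sup>2)"
proof -
  assume i: "i < n"
  have FSc: "F * S \<in> carrier_mat n n" by (rule mc) auto
  have "(transpose_mat S * (A * S)) $$ (i, i) = (\<Sum>k = 0..<n. S $$ (k, i) * (A * S) $$ (k, i))"
    by (rule tmult_entry) (auto simp: i mc)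
  also have "\<dots> = (\<Sum>k = 0..<n. \<mu> i * (S $$ (k, i) * S $$ (k, i)))"
    using AS_entry i by (intro sum.cong) auto
  also have "\<dots> = \<mu> i" using SS_entry[OF i i] by (simp add: sum_distrib_left[symmetric])
  finally have e1: "(transpose_mat S * (A * S)) $$ (i, i) = \<mu> i" .
  have "transpose_mat S * (A * S) = transpose_mat S * (transpose_mat F * (F * S))"
    unfolding A_def by (simp add: as3)
  also have "\<dots> = (transpose_mat S * transpose_mat F) * (F * S)" by (simp add: as3 mc)
  also have "\<dots> = transpose_mat (F * S) * (F * S)" by (simp add: transpose_mult[OF F_carrier Sc])
  finally have e2: "transpose_mat S * (A * S) = transpose_mat (F * S) * (F * S)" .
  have "(transpose_mat (F * S) * (F * S)) $$ (i, i) = (\<Sum>k = 0..<n. (F * S) $$ (k, i) * (F * S) $$ (k, i))"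
    by (rule tmult_entry[OF FSc FSc i i])
  with e1 e2 show ?thesis by (simp add: power2_eq_square)
qed

lemma mu_pos: "i < n \<Longrightarrow> \<mu> i > 0"
proof -
  assume i: "i < n"
  have "\<mu> i \<ge> 0" unfolding mu_sq[OF i] by (intro sum_nonneg) auto
  with mu_nz[OF i] show ?thesis by simp
qed

lemma FS_entry: "i < n \<Longrightarrow> k < n \<Longrightarrow> (F * S) $$ (k, i) = S $$ (k, i) - (if k > 0 then a * S $$ (k - 1, i) else 0)"
proof -
  assume ik: "i < n" "k < n"
  have "(F * S) $$ (k, i) = (\<Sum>j = 0..<n. (if k = j then 1 else if k = Suc j then - a else 0) * S $$ (j, i))"
    using ik by (simp add: mult_entry F_index)
  then show ?thesis using Frow_sum[OF ik(2), of a "\<lambda>j. S $$ (j, i)"] by simp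
qed

lemma shift_sum: "(\<Sum>k = 0..<Suc m. (if k > 0 then y (k - 1) else 0)) = (\<Sum>k = 0..<m. (y k :: real))"
  by (induction m) auto

lemma mu_le: "i < n \<Longrightarrow> \<mu> i \<le> (1 + a)\<^sup>2"
proof -
  assume i: "i < n"
  define x where "x k = S $$ (k, i)" for k
  have x1: "(\<Sum>k = 0..<n. (x k)\<^sup>2) = 1" using SS_entry[OF i i] unfolding x_def by (simp add: power2_eq_square)
  have pt: "(x k - (if k > 0 then a * x (k - 1) else 0))\<^sup>2 \<le> (1 + a) * ((x k)\<^sup>2 + a * (if k > 0 then (x (k - 1))\<^sup>2 else 0))" for k
  proof -
    have "(1 + a) * ((x k)\<^sup>2 + a * (x (k - 1))\<^sup>2) - (x k - a * x (k - 1))\<^sup>2 = a * (x k + x (k - 1))\<^sup>2"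
      by (simp add: power2_eq_square algebra_simps)
    moreover have "a * (x k + x (k - 1))\<^sup>2 \<ge> 0" using a1 by simp
    moreover have "(x k)\<^sup>2 \<le> (1 + a) * (x k)\<^sup>2" using a1 by (simp add: algebra_simps)
    ultimately show ?thesis by auto
  qed
  have "\<mu> i = (\<Sum>k = 0..<n. (x k - (if k > 0 then a * x (k - 1) else 0))\<^sup>2)"
    unfolding mu_sq[OF i] x_def using FS_entry[OF i] by (intro sum.cong) auto
  also have "\<dots> \<le> (\<Sum>k = 0..<n. (1 + a) * ((x k)\<^sup>2 + a * (if k > 0 then (x (k - 1))\<^sup>2 else 0)))"
    by (rule sum_mono) (rule pt)
  also have "\<dots> = (1 + a) * (1 + a * (\<Sum>k = 0..<n. (if k > 0 then (x (k - 1))\<^sup>2 else 0)))"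
    using x1 by (simp add: sum_distrib_left[symmetric] sum.distrib)
  also have "(\<Sum>k = 0..<n. (if k > 0 then (x (k - 1))\<^sup>2 else 0)) \<le> 1"
  proof -
    obtain m where m: "n = Suc m" using n1 by (cases n) auto
    have "(\<Sum>k = 0..<n. (if k > 0 then (x (k - 1))\<^sup>2 else 0)) = (\<Sum>k = 0..<m. (x k)\<^sup>2)"
      unfolding m by (rule shift_sum)
    also have "\<dots> \<le> (\<Sum>k = 0..<n. (x k)\<^sup>2)" unfolding m by simp
    finally show ?thesis using x1 by simp
  qed
  then have "(1 + a) * (1 + a * (\<Sum>k = 0..<n. (if k > 0 then (x (k - 1))\<^sup>2 else 0))) \<le> (1 + a) * (1 + a * 1)"
    using a1 by (intro mult_left_mono add_left_mono) auto
  finally show ?thesis by (simp add: power2_eq_square)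
qed

lemma eig_match:
  fixes v :: "nat \<Rightarrow> real"
  assumes nz: "\<exists>k<n. v k \<noteq> 0"
    and ev: "\<And>k. k < n \<Longrightarrow> (\<Sum>l = 0..<n. A $$ (k, l) * v l) = lam * v k"
  shows "\<exists>i<n. \<mu> i = lam"
proof -
  define c where "c i = (\<Sum>k = 0..<n. S $$ (k, i) * v k)" for i
  have SST_entry: "k < n \<Longrightarrow> l < n \<Longrightarrow> (\<Sum>i = 0..<n. S $$ (k, i) * S $$ (l, i)) = (if k = l then 1 else 0)" for k l
  proof -
    assume kl: "k < n" "l < n"
    have "(S * transpose_mat S) $$ (k, l) = (\<Sum>i = 0..<n. S $$ (k, i) * transpose_mat S $$ (i, l))"
      using kl by (intro mult_entry) auto
    also have "\<dots> = (\<Sum>i = 0..<n. S $$ (k, i) * S $$ (l, i))" using kl by (intro sum.cong) auto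
    finally show ?thesis using SST kl by simp
  qed
  have vrec: "v k = (\<Sum>i = 0..<n. S $$ (k, i) * c i)" if k: "k < n" for k
  proof -
    have "(\<Sum>i = 0..<n. S $$ (k, i) * c i) = (\<Sum>i = 0..<n. \<Sum>l = 0..<n. S $$ (k, i) * S $$ (l, i) * v l)"
      unfolding c_def by (simp add: sum_distrib_left mult.assoc)
    also have "\<dots> = (\<Sum>l = 0..<n. \<Sum>i = 0..<n. S $$ (k, i) * S $$ (l, i) * v l)" by (rule sum.swap)
    also have "\<dots> = (\<Sum>l = 0..<n. (\<Sum>i = 0..<n. S $$ (k, i) * S $$ (l, i)) * v l)" by (simp add: sum_distrib_right)
    finally have "(\<Sum>i = 0..<n. S $$ (k, i) * c i) = (\<Sum>l = 0..<n. (\<Sum>i = 0..<n. S $$ (k, i) * S $$ (l, i)) * v l)" .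
    also have "\<dots> = (\<Sum>l = 0..<n. (if k = l then 1 else 0) * v l)" using k SST_entry by (intro sum.cong) auto
    also have "\<dots> = v k" using k by (simp add: sum_ifeq')
    finally show ?thesis by simp
  qed
  obtain i where i: "i < n" "c i \<noteq> 0"
  proof -
    from nz obtain k where k: "k < n" "v k \<noteq> 0" by auto
    show ?thesis
    proof (rule ccontr)
      assume "\<not> ?thesis"
      then have "\<And>i. i < n \<Longrightarrow> c i = 0" using that by blast
      then have "v k = 0" using vrec[OF k(1)] by simp
      with k show False by simp
    qed
  qed
  have "\<mu> i * c i = (\<Sum>k = 0..<n. (A * S) $$ (k, i) * v k)"
    unfolding c_def using AS_entry i by (simp add: sum_distrib_left mult_ac)
  also have "\<dots> = (\<Sum>k = 0..<n. (\<Sum>l = 0..<n. A $$ (k, l) * S $$ (l, i)) * v k)"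
  proof (intro sum.cong refl)
    fix k assume "k \<in> {0..<n}"
    then show "(A * S) $$ (k, i) * v k = (\<Sum>l = 0..<n. A $$ (k, l) * S $$ (l, i)) * v k"
      using mult_entry[OF A_c S_c, of k i] i by simp
  qed
  also have "\<dots> = (\<Sum>k = 0..<n. \<Sum>l = 0..<n. A $$ (k, l) * S $$ (l, i) * v k)"
    by (simp add: sum_distrib_right)
  also have "\<dots> = (\<Sum>l = 0..<n. \<Sum>k = 0..<n. A $$ (k, l) * S $$ (l, i) * v k)" by (rule sum.swap)
  also have "\<dots> = (\<Sum>l = 0..<n. S $$ (l, i) * (\<Sum>k = 0..<n. A $$ (k, l) * v k))"
    by (intro sum.cong refl) (simp add: sum_distrib_left mult_ac)
  also have "\<dots> = (\<Sum>l = 0..<n. S $$ (l, i) * (lam * v l))"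
  proof (intro sum.cong refl)
    fix l assume l: "l \<in> {0..<n}"
    have "(\<Sum>k = 0..<n. A $$ (k, l) * v k) = (\<Sum>k = 0..<n. A $$ (l, k) * v k)"
      using l A_sym by (intro sum.cong) auto
    also have "\<dots> = lam * v l" using ev l by simp
    finally show "S $$ (l, i) * (\<Sum>k = 0..<n. A $$ (k, l) * v k) = S $$ (l, i) * (lam * v l)" by simp
  qed
  also have "\<dots> = lam * c i" unfolding c_def by (simp add: sum_distrib_left mult_ac)
  finally have "\<mu> i * c i = lam * c i" .
  with i show ?thesis by auto
qed

lemma det_F: "Determinant.det F = 1"
proof -
  have "Determinant.det F = prod_list (diag_mat F)"
    by (rule det_lower_triangular[of n]) (auto simp: F_index)
  also have "\<dots> = (\<Prod>i = 0..<n. F $$ (i, i))" by (simp add: prod_list_diag_prod Fmat_def)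
  also have "\<dots> = 1" by (simp add: F_index)
  finally show ?thesis .
qed

lemma det_Dm: "Determinant.det Dm = (\<Prod>i = 0..<n. 1 / \<mu> i)"
proof -
  have "Determinant.det Dm = prod_list (diag_mat Dm)"
    by (rule det_lower_triangular[of n]) (auto simp: Dm_def)
  also have "\<dots> = (\<Prod>i = 0..<n. Dm $$ (i, i))" by (simp add: prod_list_diag_prod)
  also have "\<dots> = (\<Prod>i = 0..<n. 1 / \<mu> i)" by (simp add: Dm_def)
  finally show ?thesis .
qed

lemma prod_mu: "(\<Prod>i = 0..<n. \<mu> i) = 1"
proof -
  have dA: "Determinant.det A = 1"
    unfolding A_def by (simp add: det_mult[OF FT_c F_carrier] det_transpose[OF F_carrier] det_F)
  have "Determinant.det A * Determinant.det B = 1"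
    using det_mult[OF A_c B_c] AB by (simp add: det_one)
  then have dB: "Determinant.det B = 1" using dA by simp
  have dS: "Determinant.det (transpose_mat S) * Determinant.det S = 1"
    using det_mult[OF ST_c S_c] SS by (simp add: det_one)
  have "Determinant.det Dm = Determinant.det (transpose_mat S * B * S)" unfolding eig' ..
  also have "\<dots> = Determinant.det (transpose_mat S) * Determinant.det B * Determinant.det S"
    by (simp add: det_mult[OF mc[OF ST_c B_c] S_c] det_mult[OF ST_c B_c])
  also have "\<dots> = 1" using dB dS by simp
  finally have p: "(\<Prod>i = 0..<n. 1 / \<mu> i) = 1" unfolding det_Dm .
  have "(\<Prod>i = 0..<n. 1 / \<mu> i) * (\<Prod>i = 0..<n. \<mu> i) = (\<Prod>i = 0..<n. 1 / \<mu> i * \<mu> i)"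
    by (simp only: prod.distrib)
  also have "\<dots> = 1" using mu_nz by (intro prod.neutral) auto
  finally show ?thesis using p by simp
qed

lemma sum_ln_mu: "(\<Sum>i<n. ln (\<mu> i)) = 0"
proof -
  have "(\<Sum>i<n. ln (\<mu> i)) = ln (\<Prod>i<n. \<mu> i)"
    using mu_nz by (subst ln_prod) auto
  also have "(\<Prod>i<n. \<mu> i) = 1" using prod_mu by (simp add: atLeast0LessThan)
  finally show ?thesis by simp
qed

lemma FF_apply:
  fixes v :: "nat \<Rightarrow> real"
  assumes k: "k < n"
  shows "(\<Sum>l = 0..<n. A $$ (k, l) * v l) =
    (let u = (\<lambda>j. v j - (if j > 0 then a * v (j - 1) else 0)) in u k - (if Suc k < n then a * u (Suc k) else 0))"
proof -
  define u where "u j = v j - (if j > 0 then a * v (j - 1) else 0)" for j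
  have uj: "j < n \<Longrightarrow> (\<Sum>l = 0..<n. F $$ (j, l) * v l) = u j" for j
  proof -
    assume j: "j < n"
    have "(\<Sum>l = 0..<n. F $$ (j, l) * v l) = (\<Sum>l = 0..<n. (if j = l then 1 else if j = Suc l then - a else 0) * v l)"
      using j by (intro sum.cong) (auto simp: F_index)
    then show ?thesis using Frow_sum[OF j, of a v] unfolding u_def by simp
  qed
  have "(\<Sum>l = 0..<n. A $$ (k, l) * v l) = (\<Sum>l = 0..<n. \<Sum>j = 0..<n. F $$ (j, k) * F $$ (j, l) * v l)"
    using k by (intro sum.cong) (auto simp: A_entry sum_distrib_right)
  also have "\<dots> = (\<Sum>j = 0..<n. \<Sum>l = 0..<n. F $$ (j, k) * F $$ (j, l) * v l)" by (rule sum.swap)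
  also have "\<dots> = (\<Sum>j = 0..<n. F $$ (j, k) * u j)"
  proof (intro sum.cong refl)
    fix j assume "j \<in> {0..<n}"
    then show "(\<Sum>l = 0..<n. F $$ (j, k) * F $$ (j, l) * v l) = F $$ (j, k) * u j"
      using uj[of j] by (simp add: mult.assoc sum_distrib_left[symmetric])
  qed
  also have "\<dots> = (\<Sum>j = 0..<n. (if j = k then 1 else if j = Suc k then - a else 0) * u j)"
    using k by (intro sum.cong) (auto simp: F_index)
  also have "\<dots> = u k - (if Suc k < n then a * u (Suc k) else 0)" by (rule Fcol_sum[OF k])
  finally show ?thesis unfolding u_def Let_def by simp
qed

lemma eigvec:
  assumes w: "sin ((real n + 1) * w) = a * sin (real n * w)" and k: "k < n"
  shows "(\<Sum>l = 0..<n. A $$ (k, l) * sin ((real l + 1) * w)) = gfun a w * sin ((real k + 1) * w)"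
proof -
  define v where "v l = sin ((real l + 1) * w)" for l
  define u where "u j = v j - (if j > 0 then a * v (j - 1) else 0)" for j
  have u: "u j = sin ((real j + 1) * w) - a * sin (real j * w)" for j
    unfolding u_def v_def by (cases j) (simp_all add: algebra_simps)
  have "(\<Sum>l = 0..<n. A $$ (k, l) * v l) = u k - (if Suc k < n then a * u (Suc k) else 0)"
    using FF_apply[OF k, of v] unfolding u_def Let_def by simp
  also have "\<dots> = gfun a w * sin ((real k + 1) * w)"
  proof (cases "Suc k < n")
    case True
    have sp: "sin (real k * w) + sin ((real k + 2) * w) = 2 * sin ((real k + 1) * w) * cos w"
      using sin_pair[of "(real k + 1) * w" w] by (simp add: algebra_simps)
    have "u k - a * u (Suc k) = (1 + a\<^sup>2) * sin ((real k + 1) * w) - a * (sin (real k * w) + sin ((real k + 2) * w))"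
      unfolding u by (simp add: algebra_simps power2_eq_square)
    also have "\<dots> = gfun a w * sin ((real k + 1) * w)" unfolding sp gfun_def by (simp add: algebra_simps)
    finally show ?thesis using True by simp
  next
    case False
    then have kn: "real k + 1 = real n" using k by simp
    have sp: "sin ((real n - 1) * w) + sin ((real n + 1) * w) = 2 * sin (real n * w) * cos w"
      using sin_pair[of "real n * w" w] by (simp add: algebra_simps)
    have kk: "real k = real n - 1" using kn by simp
    have e: "sin ((real n - 1) * w) = 2 * sin (real n * w) * cos w - a * sin (real n * w)"
      using sp w by linarith
    have "u k = sin (real n * w) - a * sin ((real n - 1) * w)" unfolding u kk by (simp add: algebra_simps)
    also have "sin (real n * w) - a * sin ((real n - 1) * w) = sin (real n * w) - a * (2 * sin (real n * w) * cos w - a * sin (real n * w))"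
      by (simp only: e)
    also have "\<dots> = gfun a w * sin ((real k + 1) * w)" unfolding gfun_def kn by (simp add: algebra_simps power2_eq_square)
    finally show ?thesis using False by simp
  qed
  finally show ?thesis unfolding v_def .
qed

lemma root_eig:
  assumes "1 \<le> k" "k + 1 < n"
  shows "\<exists>w p. real k * pi / n < w \<and> w < real (k + 1) * pi / n \<and> p < n \<and> \<mu> p = gfun a w"
proof -
  obtain w where w: "real k * pi / n < w" "w < real (k + 1) * pi / n" "sin ((real n + 1) * w) = a * sin (real n * w)"
    using phi_root[of n k a] assms by auto
  have npos: "real n > 0" using assms by simp
  have "real (k + 1) * pi \<le> real n * pi" using assms by (intro mult_right_mono) auto
  then have "real (k + 1) * pi / n \<le> pi" using npos by (simp add: divide_le_eq)
  moreover have "0 \<le> real k * pi / n" using npos by simp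
  ultimately have w0: "0 < w" "w < pi" using w by linarith+
  have "\<exists>i<n. \<mu> i = gfun a w"
  proof (rule eig_match[of "\<lambda>l. sin ((real l + 1) * w)"])
    show "\<exists>k<n. sin ((real k + 1) * w) \<noteq> 0" using w0 n1 sin_gt_zero[of w] by (intro exI[of _ 0]) auto
    show "\<And>k. k < n \<Longrightarrow> (\<Sum>l = 0..<n. A $$ (k, l) * sin ((real l + 1) * w)) = gfun a w * sin ((real k + 1) * w)"
      by (rule eigvec[OF w(3)])
  qed
  then show ?thesis using w by auto
qed

lemma bracket:
  assumes j: "j + 2 < n"
  shows "gfun a (real (j + 1) * pi / n) \<le> \<mu> (j + 2)" "\<mu> j \<le> gfun a (real (j + 2) * pi / n)"
proof -
  have ex: "\<exists>w p. real (j + 1) * pi / n < w \<and> w < real (j + 2) * pi / n \<and> p < n \<and> \<mu> p = gfun a w"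
    if "j + 2 < n" for j
  proof -
    from root_eig[of "j + 1"] that obtain w p where "real (j + 1) * pi / n < w" "w < real (j + 1 + 1) * pi / n" "p < n" "\<mu> p = gfun a w"
      by auto
    then show ?thesis by (intro exI[of _ w] exI[of _ p]) (auto simp: add.assoc)
  qed
  have "\<forall>j. \<exists>w p. j + 2 < n \<longrightarrow> real (j + 1) * pi / n < w \<and> w < real (j + 2) * pi / n \<and> p < n \<and> \<mu> p = gfun a w"
  proof
    fix j show "\<exists>w p. j + 2 < n \<longrightarrow> real (j + 1) * pi / n < w \<and> w < real (j + 2) * pi / n \<and> p < n \<and> \<mu> p = gfun a w"
      using ex[of j] by (cases "j + 2 < n") auto
  qed
  then obtain W P where WP: "\<And>j. j + 2 < n \<Longrightarrow> real (j + 1) * pi / n < W j \<and> W j < real (j + 2) * pi / n \<and> P j < n \<and> \<mu> (P j) = gfun a (W j)"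
    by metis
  have npos: "real n > 0" using n1 by simp
  have Wr: "0 < W j \<and> W j < pi" if "j + 2 < n" for j
  proof -
    have "real (j + 2) * pi \<le> real n * pi" using that by (intro mult_right_mono) auto
    then have "real (j + 2) * pi / n \<le> pi" using npos by (simp add: divide_le_eq)
    moreover have "0 \<le> real (j + 1) * pi / n" using npos by simp
    ultimately show ?thesis using WP[OF that] by linarith
  qed
  define m where "m = n - 3"
  have m: "j \<le> m" "m + 3 = n" using j unfolding m_def by auto
  have Pmono: "P i < P (Suc i)" if "Suc i \<le> m" for i
  proof (rule ccontr)
    assume "\<not> P i < P (Suc i)"
    then have le: "P (Suc i) \<le> P i" by simp
    have i1: "i + 2 < n" "Suc i + 2 < n" using that m by auto
    have "\<mu> (P (Suc i)) \<le> \<mu> (P i)" using mono[rule_format, of "P (Suc i)" "P i"] le WP[OF i1(1)] by auto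
    moreover have "W i < W (Suc i)"
    proof -
      have "W i < real (i + 2) * pi / n" using WP[OF i1(1)] by simp
      also have "\<dots> = real (Suc i + 1) * pi / n" by simp
      also have "\<dots> < W (Suc i)" using WP[OF i1(2)] by simp
      finally show ?thesis .
    qed
    then have "gfun a (W i) < gfun a (W (Suc i))"
      using Wr[OF i1(1)] Wr[OF i1(2)] a1 by (intro g_strict) auto
    ultimately show False using WP[OF i1(1)] WP[OF i1(2)] by simp
  qed
  have low: "j \<le> P j" by (rule smono_lower[where p=P and m=m, OF Pmono m(1)])
  have "P j + (m - j) \<le> P m" by (rule smono_upper[where p=P and m=m, OF Pmono m(1)])
  moreover have "P m < n" using WP[of m] m by auto
  ultimately have up: "P j \<le> j + 2" using m by simp
  have WPj: "real (j + 1) * pi / n < W j" "W j < real (j + 2) * pi / n" "\<mu> (P j) = gfun a (W j)" "P j < n"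
    using WP[OF j] by auto
  have "gfun a ((j + 1) * pi / n) \<le> gfun a (W j)"
    using WPj Wr[OF j] a1 npos by (intro g_mono) auto
  also have "\<dots> = \<mu> (P j)" using WPj by simp
  also have "\<dots> \<le> \<mu> (j + 2)" using mono up j by auto
  finally show "gfun a (real (j + 1) * pi / n) \<le> \<mu> (j + 2)" by simp
  have "\<mu> j \<le> \<mu> (P j)" using mono[rule_format, of j "P j"] low WPj(4) by auto
  also have "\<dots> = gfun a (W j)" using WPj by simp
  also have "\<dots> \<le> gfun a ((j + 2) * pi / n)"
  proof -
    have "real (j + 2) * pi \<le> real n * pi" using j by (intro mult_right_mono) auto
    then have "real (j + 2) * pi / n \<le> pi" using npos by (simp add: divide_le_eq)
    then show ?thesis using WPj Wr[OF j] a1 by (intro g_mono) auto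
  qed
  finally show "\<mu> j \<le> gfun a (real (j + 2) * pi / n)" by simp
qed

end

lemma AR_formula: "AR a Z (Suc k) \<omega> = (\<Sum>m<Suc k. a ^ (k - m) * Z (Suc m) \<omega>)"
proof (induction k)
  case 0 then show ?case by simp
next
  case (Suc k)
  have "AR a Z (Suc (Suc k)) \<omega> = a * (\<Sum>m<Suc k. a ^ (k - m) * Z (Suc m) \<omega>) + Z (Suc (Suc k)) \<omega>"
    using Suc by simp
  also have "a * (\<Sum>m<Suc k. a ^ (k - m) * Z (Suc m) \<omega>) = (\<Sum>m<Suc k. a ^ (Suc k - m) * Z (Suc m) \<omega>)"
    unfolding sum_distrib_left by (intro sum.cong refl) (simp add: Suc_diff_le)
  finally show ?case by simp
qed

lemma AR_L: "k < n \<Longrightarrow> AR a Z (Suc k) \<omega> = (\<Sum>m<n. Lmat a n $$ (k, m) * Z (Suc m) \<omega>)"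
proof -
  assume k: "k < n"
  have "(\<Sum>m<n. Lmat a n $$ (k, m) * Z (Suc m) \<omega>) = (\<Sum>m<n. if m \<le> k then a ^ (k - m) * Z (Suc m) \<omega> else 0)"
    using k by (intro sum.cong refl) (simp add: Lmat_def)
  also have "\<dots> = (\<Sum>m\<in>{m\<in>{..<n}. m \<le> k}. a ^ (k - m) * Z (Suc m) \<omega>)"
    by (rule sum.inter_filter[symmetric]) simp
  also have "{m\<in>{..<n}. m \<le> k} = {..<Suc k}" using k by auto
  finally show ?thesis using AR_formula by simp
qed

context spec
begin

definition "bb i m = (\<Sum>k<n. S $$ (k, i) * L $$ (k, m))"

lemma G_entry: "i < n \<Longrightarrow> j < n \<Longrightarrow> (\<Sum>m<n. bb i m * bb j m) = (if i = j then 1 / \<mu> i else 0)"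
proof -
  assume ij: "i < n" "j < n"
  define X where "X = transpose_mat S * L"
  have Xc: "X \<in> carrier_mat n n" unfolding X_def by (rule mc) auto
  have Xe: "k < n \<Longrightarrow> m < n \<Longrightarrow> X $$ (k, m) = bb k m" for k m
    unfolding X_def bb_def using tmult_entry[OF S_c L_carrier] by (simp add: atLeast0LessThan)
  have "X * transpose_mat X = transpose_mat S * L * (transpose_mat L * S)"
    unfolding X_def by (simp add: transpose_mult[OF ST_c L_carrier])
  also have "\<dots> = transpose_mat S * (L * transpose_mat L) * S"
    by (simp add: as3 mc)
  also have "\<dots> = Dm" unfolding B_def[symmetric] eig' ..
  finally have XX: "X * transpose_mat X = Dm" .
  have "(X * transpose_mat X) $$ (i, j) = (\<Sum>m = 0..<n. X $$ (i, m) * transpose_mat X $$ (m, j))"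
    by (rule mult_entry[OF Xc _ ij]) (use Xc in simp)
  also have "\<dots> = (\<Sum>m<n. bb i m * bb j m)"
    unfolding atLeast0LessThan using Xc ij by (intro sum.cong refl) (simp add: Xe)
  finally show ?thesis using XX ij by (simp add: Dm_def)
qed

lemma x_expand: "i < n \<Longrightarrow> (\<Sum>k<n. S $$ (k, i) * AR a Z (Suc k) \<omega>) = (\<Sum>m<n. bb i m * Z (Suc m) \<omega>)"
proof -
  assume i: "i < n"
  have "(\<Sum>k<n. S $$ (k, i) * AR a Z (Suc k) \<omega>) = (\<Sum>k<n. \<Sum>m<n. S $$ (k, i) * (L $$ (k, m) * Z (Suc m) \<omega>))"
  proof (intro sum.cong refl)
    fix k assume "k \<in> {..<n}"
    then have "AR a Z (Suc k) \<omega> = (\<Sum>m<n. L $$ (k, m) * Z (Suc m) \<omega>)" using AR_L[of k n a Z \<omega>] by simp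
    then show "S $$ (k, i) * AR a Z (Suc k) \<omega> = (\<Sum>m<n. S $$ (k, i) * (L $$ (k, m) * Z (Suc m) \<omega>))"
      by (simp only: sum_distrib_left)
  qed
  also have "\<dots> = (\<Sum>m<n. \<Sum>k<n. S $$ (k, i) * (L $$ (k, m) * Z (Suc m) \<omega>))" by (rule sum.swap)
  also have "\<dots> = (\<Sum>m<n. bb i m * Z (Suc m) \<omega>)"
    unfolding bb_def by (intro sum.cong refl) (simp add: sum_distrib_right mult.assoc)
  finally show ?thesis .
qed

end

lemma even_int:
  fixes h :: "real \<Rightarrow> real"
  assumes cont: "continuous_on {-pi..pi} (\<lambda>w. h (gfun a w))"
  shows "integral {-pi..pi} (\<lambda>w. h (gfun a w)) = 2 * integral {0..pi} (\<lambda>w. h (gfun a w))"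
proof -
  have int: "(\<lambda>w. h (gfun a w)) integrable_on {-pi..pi}" by (rule integrable_continuous_interval[OF cont])
  have "integral {-pi..0} (\<lambda>w. h (gfun a w)) + integral {0..pi} (\<lambda>w. h (gfun a w)) = integral {-pi..pi} (\<lambda>w. h (gfun a w))"
    by (rule Henstock_Kurzweil_Integration.integral_combine) (use int in auto)
  moreover have "integral {-pi..0} (\<lambda>w. h (gfun a w)) = integral {0..pi} (\<lambda>w. h (gfun a w))"
  proof -
    have "integral {-pi..-0} (\<lambda>w. h (gfun a (-w))) = integral {0..pi} (\<lambda>w. h (gfun a w))"
      using Henstock_Kurzweil_Integration.integral_reflect_real[of pi 0 "\<lambda>w. h (gfun a w)"] by simp
    moreover have "(\<lambda>w. h (gfun a (-w))) = (\<lambda>w. h (gfun a w))" by (simp add: gfun_def)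
    ultimately show ?thesis by simp
  qed
  ultimately show ?thesis by simp
qed

lemma gfun_cont: "continuous_on A (gfun a)"
  unfolding gfun_def by (intro continuous_intros)

theorem proposition1:
  fixes M :: "'a measure" and Z :: "nat \<Rightarrow> 'a \<Rightarrow> real"
    and a \<sigma>2 d \<theta> :: real
  assumes "prob_space M"
    and a: "a > 1" and sig: "\<sigma>2 > 0"
    and d: "0 < d" "d < \<sigma>2 / (a\<^sup>2 - 1)"
    and Zind: "prob_space.indep_vars M (\<lambda>_. borel) Z {1..}"
    and Zdist: "\<And>i. i \<ge> 1 \<Longrightarrow> distributed M lborel (Z i) (normal_density 0 (sqrt \<sigma>2))"
    and th: "\<theta> > 0"
      "d = 1 / (2 * pi) * integral {-pi..pi} (\<lambda>w. min \<theta> (\<sigma>2 / gfun a w))"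
  shows "\<exists>C1 C2. C1 > 0 \<and> C2 > 0 \<and>
    (\<forall>n \<ge> 1. \<forall>(S :: real mat) (\<mu> :: nat \<Rightarrow> real).
       S \<in> carrier_mat n n \<and> transpose_mat S * S = 1\<^sub>m n \<and>
       (\<forall>i j. i \<le> j \<and> j < n \<longrightarrow> \<mu> i \<le> \<mu> j) \<and>
       transpose_mat S * inv_of_mat (transpose_mat (Fmat a n) * Fmat a n) * S
         = mat n n (\<lambda>(i, j). if i = j then 1 / \<mu> i else 0)
     \<longrightarrow>
       (let s = (\<lambda>i. \<sigma>2 / \<mu> i);
            J = (\<lambda>\<omega>. jtilted n s \<theta> (\<lambda>i. \<Sum>k<n. S $$ (k, i) * AR a Z (Suc k) \<omega>))
        in \<bar>prob_space.expectation M J / n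
              - 1 / (2 * pi) * integral {-pi..pi} (\<lambda>w. 1/2 * ln (max (gfun a w) (\<sigma>2 / \<theta>)))\<bar>
             \<le> C1 / n
         \<and> \<bar>prob_space.variance M J / n
              - 1 / (4 * pi) * integral {-pi..pi} (\<lambda>w. min 1 ((\<sigma>2 / (\<theta> * gfun a w))\<^sup>2))\<bar>
             \<le> C2 / n))"
proof -
  interpret P: prob_space M by (rule assms(1))
  define c where "c = \<sigma>2 / \<theta>"
  have cpos: "c > 0" using sig th(1) unfolding c_def by simp
  define h1 where "h1 = (\<lambda>t::real. 1/2 * ln (max t c))"
  define h2 where "h2 = (\<lambda>t::real. 1/2 * min 1 ((\<sigma>2 / (\<theta> * t))\<^sup>2))"
  define B1 where "B1 = \<bar>ln c\<bar> + \<bar>ln ((1 + a)\<^sup>2)\<bar> + 1"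
  have B1pos: "B1 > 0" unfolding B1_def by simp
  have h1B: "\<bar>h1 t\<bar> \<le> B1" if t: "0 < t" "t \<le> (1 + a)\<^sup>2" for t
  proof -
    have "c \<le> max t c" "max t c \<le> max ((1 + a)\<^sup>2) c" using t by auto
    then have l: "ln c \<le> ln (max t c)" "ln (max t c) \<le> ln (max ((1 + a)\<^sup>2) c)" using cpos by auto
    have "ln (max ((1 + a)\<^sup>2) c) \<le> \<bar>ln c\<bar> + \<bar>ln ((1 + a)\<^sup>2)\<bar>" by (cases "(1 + a)\<^sup>2 \<le> c") (auto simp: max_def)
    with l have "\<bar>ln (max t c)\<bar> \<le> \<bar>ln c\<bar> + \<bar>ln ((1 + a)\<^sup>2)\<bar>" by (simp add: abs_le_iff)
    then show ?thesis unfolding h1_def B1_def by simp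
  qed
  have h1mono: "h1 x \<le> h1 y" if "x \<le> y" for x y
  proof -
    have "max x c \<le> max y c" using that by auto
    then show ?thesis unfolding h1_def using cpos by auto
  qed
  have h2B: "\<bar>h2 t\<bar> \<le> 1" for t
  proof -
    have "0 \<le> min 1 ((\<sigma>2 / (\<theta> * t))\<^sup>2)" "min 1 ((\<sigma>2 / (\<theta> * t))\<^sup>2) \<le> 1" by auto
    then show ?thesis unfolding h2_def by auto
  qed
  have h2mono: "h2 y \<le> h2 x" if "0 < x" "x \<le> y" for x y
  proof -
    have "\<sigma>2 / (\<theta> * y) \<le> \<sigma>2 / (\<theta> * x)" using that sig th(1)
      by (intro divide_left_mono mult_left_mono mult_pos_pos) auto
    moreover have "0 \<le> \<sigma>2 / (\<theta> * y)" using that sig th(1) by simp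
    ultimately have "(\<sigma>2 / (\<theta> * y))\<^sup>2 \<le> (\<sigma>2 / (\<theta> * x))\<^sup>2" by (rule power_mono)
    then show ?thesis unfolding h2_def by auto
  qed
  have gpos: "gfun a w > 0" for w using g_pos[OF a] .
  have gnz: "gfun a w \<noteq> 0" for w using gpos[of w] by simp
  have h1c: "continuous_on A (\<lambda>w. h1 (gfun a w))" for A
    unfolding h1_def using cpos by (intro continuous_intros gfun_cont) (auto simp: max_def)
  have h2c: "continuous_on A (\<lambda>w. h2 (gfun a w))" for A
    unfolding h2_def using gnz th(1) by (intro continuous_intros gfun_cont) auto
  define I1 where "I1 = integral {0..pi} (\<lambda>w. h1 (gfun a w))"
  define I2 where "I2 = integral {0..pi} (\<lambda>w. h2 (gfun a w))"
  have Rint: "1 / (2 * pi) * integral {-pi..pi} (\<lambda>w. 1/2 * ln (max (gfun a w) (\<sigma>2 / \<theta>))) = I1 / pi"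
  proof -
    have "integral {-pi..pi} (\<lambda>w. 1/2 * ln (max (gfun a w) (\<sigma>2 / \<theta>))) = integral {-pi..pi} (\<lambda>w. h1 (gfun a w))"
      unfolding h1_def c_def ..
    also have "\<dots> = 2 * I1" unfolding I1_def by (rule even_int[OF h1c])
    finally show ?thesis by simp
  qed
  have Vint: "1 / (4 * pi) * integral {-pi..pi} (\<lambda>w. min 1 ((\<sigma>2 / (\<theta> * gfun a w))\<^sup>2)) = I2 / pi"
  proof -
    have "integral {-pi..pi} (\<lambda>w. min 1 ((\<sigma>2 / (\<theta> * gfun a w))\<^sup>2)) = integral {-pi..pi} (\<lambda>w. 2 * h2 (gfun a w))"
      unfolding h2_def by simp
    also have "\<dots> = 2 * integral {-pi..pi} (\<lambda>w. h2 (gfun a w))" by (rule integral_mult_right)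
    also have "integral {-pi..pi} (\<lambda>w. h2 (gfun a w)) = 2 * I2" unfolding I2_def by (rule even_int[OF h2c])
    finally show ?thesis by simp
  qed
  show ?thesis
  proof (rule exI[of _ "6 * B1"], rule exI[of _ "6::real"], intro conjI allI impI)
    show "6 * B1 > 0" using B1pos by simp
    show "(6::real) > 0" by simp
    fix n :: nat and S :: "real mat" and \<mu> :: "nat \<Rightarrow> real"
    assume n: "n \<ge> 1" and H: "S \<in> carrier_mat n n \<and> transpose_mat S * S = 1\<^sub>m n \<and>
       (\<forall>i j. i \<le> j \<and> j < n \<longrightarrow> \<mu> i \<le> \<mu> j) \<and>
       transpose_mat S * inv_of_mat (transpose_mat (Fmat a n) * Fmat a n) * S
         = mat n n (\<lambda>(i, j). if i = j then 1 / \<mu> i else 0)"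
    interpret spec a n S \<mu> using H n a by unfold_locales auto
    define s where "s = (\<lambda>i. \<sigma>2 / \<mu> i)"
    define J where "J = (\<lambda>\<omega>. jtilted n s \<theta> (\<lambda>i. \<Sum>k<n. S $$ (k, i) * AR a Z (Suc k) \<omega>))"
    define w where "w i = min \<theta> (s i) / (2 * \<theta>)" for i
    define cc where "cc i = w i / s i" for i
    define K0 where "K0 = - (\<Sum>i<n. w i) + 1/2 * (\<Sum>i<n. ln (max \<theta> (s i) / \<theta>))"
    define Q where "Q = (\<lambda>\<omega>. \<Sum>i<n. cc i * (\<Sum>m<n. bb i m * Z (Suc m) \<omega>)\<^sup>2)"
    have spos: "s i > 0" if "i < n" for i unfolding s_def using sig mu_pos[OF that] by simp
    have JQ: "J = (\<lambda>\<omega>. Q \<omega> + K0)"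
    proof
      fix \<omega>
      have "(\<Sum>i<n. min \<theta> (s i) / (2 * \<theta>) * ((\<Sum>k<n. S $$ (k, i) * AR a Z (Suc k) \<omega>)\<^sup>2 / s i - 1))
          = (\<Sum>i<n. cc i * (\<Sum>m<n. bb i m * Z (Suc m) \<omega>)\<^sup>2 - w i)"
      proof (intro sum.cong refl)
        fix i assume "i \<in> {..<n}"
        then have xe: "(\<Sum>k<n. S $$ (k, i) * AR a Z (Suc k) \<omega>) = (\<Sum>m<n. bb i m * Z (Suc m) \<omega>)"
          by (intro x_expand) simp
        show "min \<theta> (s i) / (2 * \<theta>) * ((\<Sum>k<n. S $$ (k, i) * AR a Z (Suc k) \<omega>)\<^sup>2 / s i - 1)
          = cc i * (\<Sum>m<n. bb i m * Z (Suc m) \<omega>)\<^sup>2 - w i"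
          unfolding xe cc_def w_def by (simp add: algebra_simps)
      qed
      then show "J \<omega> = Q \<omega> + K0"
        unfolding J_def jtilted_def Q_def K0_def by (simp add: sum_subtractf)
    qed
    note qm0 = quad_moments[where M=M and Z=Z and b=bb and cc=cc and gd="\<lambda>i. 1 / \<mu> i" and n=n]
    have qm1: "integrable M Q" unfolding Q_def by (rule qm0(1)) (use assms(1) Zind Zdist sig G_entry in auto)
    have qm2: "integrable M (\<lambda>\<omega>. (Q \<omega>)\<^sup>2)" unfolding Q_def by (rule qm0(2)) (use assms(1) Zind Zdist sig G_entry in auto)
    have qm3: "integral\<^sup>L M Q = \<sigma>2 * (\<Sum>i<n. cc i * (1 / \<mu> i))" unfolding Q_def by (rule qm0(3)) (use assms(1) Zind Zdist sig G_entry in auto)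
    have qm4: "integral\<^sup>L M (\<lambda>\<omega>. (Q \<omega>)\<^sup>2) - (integral\<^sup>L M Q)\<^sup>2 = 2 * \<sigma>2\<^sup>2 * (\<Sum>i<n. (cc i)\<^sup>2 * (1 / \<mu> i)\<^sup>2)"
      unfolding Q_def by (rule qm0(4)) (use assms(1) Zind Zdist sig G_entry in auto)
    note qm = qm1 qm2 qm3 qm4
    have EQ: "integral\<^sup>L M Q = (\<Sum>i<n. w i)"
    proof -
      have "integral\<^sup>L M Q = \<sigma>2 * (\<Sum>i<n. cc i * (1 / \<mu> i))" by (rule qm(3))
      also have "\<dots> = (\<Sum>i<n. w i)" unfolding sum_distrib_left
      proof (intro sum.cong refl)
        fix i assume "i \<in> {..<n}"
        then have mp: "\<mu> i > 0" using mu_pos by simp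
        then show "\<sigma>2 * (cc i * (1 / \<mu> i)) = w i" unfolding cc_def s_def using sig by (simp add: field_simps)
      qed
      finally show ?thesis .
    qed
    have intJ: "integrable M J" unfolding JQ using qm(1) by simp
    have EJ0: "integral\<^sup>L M J = integral\<^sup>L M Q + K0" unfolding JQ using qm(1) by (simp add: P.prob_space)
    have EJ: "integral\<^sup>L M J = (\<Sum>i<n. h1 (\<mu> i))"
    proof -
      have lnq: "ln (max \<theta> (s i) / \<theta>) = 2 * h1 (\<mu> i) - ln (\<mu> i)" if i: "i < n" for i
      proof -
        have mp: "\<mu> i > 0" by (rule mu_pos[OF i])
        have "max \<theta> (s i) / \<theta> = max (\<mu> i) c / \<mu> i"
          using mp th(1) sig unfolding s_def c_def by (auto simp: max_def field_simps)
        also have "ln \<dots> = ln (max (\<mu> i) c) - ln (\<mu> i)" using mp cpos by (simp add: ln_div)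
        finally show ?thesis unfolding h1_def by simp
      qed
      have "integral\<^sup>L M J = 1/2 * (\<Sum>i<n. ln (max \<theta> (s i) / \<theta>))" unfolding EJ0 EQ K0_def by simp
      also have "\<dots> = 1/2 * (\<Sum>i<n. 2 * h1 (\<mu> i) - ln (\<mu> i))" using lnq by simp
      also have "\<dots> = (\<Sum>i<n. h1 (\<mu> i))" using sum_ln_mu by (simp add: sum_subtractf sum_distrib_left[symmetric])
      finally show ?thesis .
    qed
    have VJ: "integral\<^sup>L M (\<lambda>\<omega>. (J \<omega> - integral\<^sup>L M J)\<^sup>2) = (\<Sum>i<n. h2 (\<mu> i))"
    proof -
      have "(\<lambda>\<omega>. (J \<omega> - integral\<^sup>L M J)\<^sup>2) = (\<lambda>\<omega>. (Q \<omega> - integral\<^sup>L M Q)\<^sup>2)"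
        unfolding EJ0 by (simp add: JQ)
      then have "integral\<^sup>L M (\<lambda>\<omega>. (J \<omega> - integral\<^sup>L M J)\<^sup>2) = integral\<^sup>L M (\<lambda>\<omega>. (Q \<omega>)\<^sup>2) - (integral\<^sup>L M Q)\<^sup>2"
        using P.variance_eq[OF qm(1) qm(2)] by simp
      also have "\<dots> = 2 * \<sigma>2\<^sup>2 * (\<Sum>i<n. (cc i)\<^sup>2 * (1 / \<mu> i)\<^sup>2)" by (rule qm(4))
      also have "\<dots> = (\<Sum>i<n. h2 (\<mu> i))" unfolding sum_distrib_left
      proof (intro sum.cong refl)
        fix i assume "i \<in> {..<n}"
        then have i: "i < n" by simp
        have mp: "\<mu> i > 0" by (rule mu_pos[OF i])
        have sp: "s i > 0" by (rule spos[OF i])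
        have e1: "2 * \<sigma>2\<^sup>2 * ((cc i)\<^sup>2 * (1 / \<mu> i)\<^sup>2) = 2 * (w i)\<^sup>2"
          using mp sig unfolding cc_def s_def by (simp add: field_simps power2_eq_square)
        have e2: "w i = 1/2 * min 1 (s i / \<theta>)" unfolding w_def using th(1) by (simp add: min_def field_simps)
        have e3: "s i / \<theta> = \<sigma>2 / (\<theta> * \<mu> i)" unfolding s_def by simp
        have e4: "(min 1 (s i / \<theta>))\<^sup>2 = min 1 ((s i / \<theta>)\<^sup>2)"
        proof -
          have x0: "0 \<le> s i / \<theta>" using sp th(1) by simp
          show ?thesis
          proof (cases "s i / \<theta> \<le> 1")
            case True
            then have "(s i / \<theta>)\<^sup>2 \<le> 1" using x0 by (simp add: power_le_one)
            then show ?thesis using True by (simp add: min_def)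
          next
            case False
            then have "1 \<le> (s i / \<theta>)\<^sup>2" by (intro one_le_power) simp
            then show ?thesis using False by (simp add: min_def)
          qed
        qed
        show "2 * \<sigma>2\<^sup>2 * ((cc i)\<^sup>2 * (1 / \<mu> i)\<^sup>2) = h2 (\<mu> i)"
          unfolding e1 e2 h2_def e3[symmetric] using e4 by (simp add: power2_eq_square field_simps)
      qed
      finally show ?thesis .
    qed
    have br1: "gfun a ((real j + 1) * pi / real n) \<le> \<mu> (j + 2)" if "j + 2 < n" for j
      using bracket(1)[OF that] by (simp add: add.commute)
    have br2: "\<mu> j \<le> gfun a ((real j + 2) * pi / real n)" if "j + 2 < n" for j
      using bracket(2)[OF that] by (simp add: add.commute)
    have bs1: "\<bar>(\<Sum>i<n. h1 (\<mu> i)) - n / pi * I1\<bar> \<le> 6 * B1"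
      unfolding I1_def
    proof (rule bracket_sum)
      show "\<And>x y. 0 \<le> x \<Longrightarrow> x \<le> y \<Longrightarrow> y \<le> pi \<Longrightarrow> h1 (gfun a x) \<le> h1 (gfun a y)"
        using a by (intro h1mono g_mono) auto
      show "continuous_on {0..pi} (\<lambda>w. h1 (gfun a w))" by (rule h1c)
      show "1 \<le> n" by (rule n)
      show "\<And>x. 0 \<le> x \<Longrightarrow> x \<le> pi \<Longrightarrow> \<bar>h1 (gfun a x)\<bar> \<le> B1"
        using g_bounds[OF a] gpos by (intro h1B) auto
      show "\<And>i. i < n \<Longrightarrow> \<bar>h1 (\<mu> i)\<bar> \<le> B1" using mu_pos mu_le by (intro h1B) auto
      show "\<And>j. j + 2 < n \<Longrightarrow> h1 (gfun a ((real j + 1) * pi / real n)) \<le> h1 (\<mu> (j + 2))"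
        using br1 by (intro h1mono) simp
      show "\<And>j. j + 2 < n \<Longrightarrow> h1 (\<mu> j) \<le> h1 (gfun a ((real j + 2) * pi / real n))"
        using br2 by (intro h1mono) simp
    qed
    have bs2: "\<bar>(\<Sum>i<n. - h2 (\<mu> i)) - n / pi * integral {0..pi} (\<lambda>w. - h2 (gfun a w))\<bar> \<le> 6 * 1"
    proof (rule bracket_sum)
      show "\<And>x y. 0 \<le> x \<Longrightarrow> x \<le> y \<Longrightarrow> y \<le> pi \<Longrightarrow> - h2 (gfun a x) \<le> - h2 (gfun a y)"
        using a gpos by (auto intro!: h2mono g_mono)
      show "continuous_on {0..pi} (\<lambda>w. - h2 (gfun a w))" by (intro continuous_intros h2c)
      show "1 \<le> n" by (rule n)
      show "\<And>x. 0 \<le> x \<Longrightarrow> x \<le> pi \<Longrightarrow> \<bar>- h2 (gfun a x)\<bar> \<le> 1" using h2B by simp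
      show "\<And>i. i < n \<Longrightarrow> \<bar>- h2 (\<mu> i)\<bar> \<le> 1" using h2B by simp
      show "\<And>j. j + 2 < n \<Longrightarrow> - h2 (gfun a ((real j + 1) * pi / real n)) \<le> - h2 (\<mu> (j + 2))"
        using br1 gpos by (auto intro!: h2mono)
      show "\<And>j. j + 2 < n \<Longrightarrow> - h2 (\<mu> j) \<le> - h2 (gfun a ((real j + 2) * pi / real n))"
        using br2 mu_pos by (auto intro!: h2mono)
    qed
    have bs2': "\<bar>(\<Sum>i<n. h2 (\<mu> i)) - n / pi * I2\<bar> \<le> 6"
    proof -
      have "(\<Sum>i<n. - h2 (\<mu> i)) - n / pi * integral {0..pi} (\<lambda>w. - h2 (gfun a w)) = - ((\<Sum>i<n. h2 (\<mu> i)) - n / pi * I2)"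
        unfolding I2_def integral_neg by (simp add: sum_negf)
      with bs2 show ?thesis by simp
    qed
    have npos: "real n > 0" using n by simp
    have fin1: "\<bar>integral\<^sup>L M J / n - I1 / pi\<bar> \<le> 6 * B1 / n"
    proof -
      have "integral\<^sup>L M J / n - I1 / pi = ((\<Sum>i<n. h1 (\<mu> i)) - n / pi * I1) / n"
        unfolding EJ using npos by (simp add: field_simps)
      then show ?thesis using bs1 npos by (simp add: abs_div divide_right_mono)
    qed
    have fin2: "\<bar>integral\<^sup>L M (\<lambda>\<omega>. (J \<omega> - integral\<^sup>L M J)\<^sup>2) / n - I2 / pi\<bar> \<le> 6 / n"
    proof -
      have "integral\<^sup>L M (\<lambda>\<omega>. (J \<omega> - integral\<^sup>L M J)\<^sup>2) / n - I2 / pi = ((\<Sum>i<n. h2 (\<mu> i)) - n / pi * I2) / n"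
        unfolding VJ using npos by (simp add: field_simps)
      then show ?thesis using bs2' npos by (simp add: abs_div divide_right_mono)
    qed
    have Jx: "J x = jtilted n s \<theta> (\<lambda>i. \<Sum>k<n. S $$ (k, i) * AR a Z (Suc k) x)" for x
      unfolding J_def ..
    have eqv: "(\<lambda>x. (J x - integral\<^sup>L M J)\<^sup>2) = (\<lambda>x. (jtilted n s \<theta> (\<lambda>i. \<Sum>k<n. S $$ (k, i) * AR a Z (Suc k) x) - integral\<^sup>L M J)\<^sup>2)"
      by (simp only: Jx)
    have goal: "\<bar>integral\<^sup>L M J / n - 1 / (2 * pi) * integral {-pi..pi} (\<lambda>w. 1/2 * ln (max (gfun a w) (\<sigma>2 / \<theta>)))\<bar> \<le> 6 * B1 / n
       \<and> \<bar>integral\<^sup>L M (\<lambda>\<omega>. (J \<omega> - integral\<^sup>L M J)\<^sup>2) / n - 1 / (4 * pi) * integral {-pi..pi} (\<lambda>w. min 1 ((\<sigma>2 / (\<theta> * gfun a w))\<^sup>2))\<bar> \<le> 6 / n"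
      unfolding Rint Vint using fin1 fin2 by blast
    show "let s = (\<lambda>i. \<sigma>2 / \<mu> i);
            J = (\<lambda>\<omega>. jtilted n s \<theta> (\<lambda>i. \<Sum>k<n. S $$ (k, i) * AR a Z (Suc k) \<omega>))
        in \<bar>prob_space.expectation M J / n
              - 1 / (2 * pi) * integral {-pi..pi} (\<lambda>w. 1/2 * ln (max (gfun a w) (\<sigma>2 / \<theta>)))\<bar>
             \<le> 6 * B1 / n
         \<and> \<bar>prob_space.variance M J / n
              - 1 / (4 * pi) * integral {-pi..pi} (\<lambda>w. min 1 ((\<sigma>2 / (\<theta> * gfun a w))\<^sup>2))\<bar>
             \<le> 6 / n"
      unfolding Let_def s_def[symmetric] J_def[symmetric] eqv[symmetric] by (rule goal)
  qed
qed

end
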